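(* For every equation $u_t+uu_x=A^2(t,x)u_{xx}+A^1(t,x)u_x$ of the class $\hat{\mathcal L}_1$, its maximal Lie invariance algebra has dimension at most $2$.
   Context: All functions are smooth. $\hat{\mathcal L}_1$ is the class of equations $u_t+uu_x=A^2(t,x)u_{xx}+A^1(t,x)u_x$ for $u(t,x)$ with smooth arbitrary elements $A^1,A^2$ satisfying $A^2\neq0$ and $A^1_{xx}\neq0$ (superscripts are indices). The maximal Lie invariance algebra is the algebra of all vector fields on $(t,x,u)$ generating one-parameter groups of point symmetries of the equation. *)

theory Defs
  imports "HOL-Analysis.Analysis"
begin

definition pder :: "('a::real_normed_vector \<Rightarrow> real) \<Rightarrow> 'a \<Rightarrow> 'a \<Rightarrow> real" where
  "pder f v p = frechet_derivative f (at p) v"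

coinductive smooth_on :: "'a::euclidean_space set \<Rightarrow> ('a \<Rightarrow> real) \<Rightarrow> bool" for S where
  "(\<forall>p\<in>S. f differentiable (at p)) \<Longrightarrow> (\<forall>i\<in>Basis. smooth_on S (pder f i)) \<Longrightarrow> smooth_on S f"

abbreviation "d_t2 f \<equiv> pder f ((1,0)::real\<times>real)"
abbreviation "d_x2 f \<equiv> pder f ((0,1)::real\<times>real)"
abbreviation "d_t f \<equiv> pder f ((1,0,0)::real\<times>real\<times>real)"
abbreviation "d_x f \<equiv> pder f ((0,1,0)::real\<times>real\<times>real)"
abbreviation "d_u f \<equiv> pder f ((0,0,1)::real\<times>real\<times>real)"

definition Dt1 :: "(real\<times>real\<times>real \<Rightarrow> real) \<Rightarrow> real \<Rightarrow> real \<Rightarrow> real \<Rightarrow> real \<Rightarrow> real" where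
  "Dt1 F t x u ut = d_t F (t,x,u) + ut * d_u F (t,x,u)"

definition Dx1 :: "(real\<times>real\<times>real \<Rightarrow> real) \<Rightarrow> real \<Rightarrow> real \<Rightarrow> real \<Rightarrow> real \<Rightarrow> real" where
  "Dx1 F t x u ux = d_x F (t,x,u) + ux * d_u F (t,x,u)"

definition Dxx :: "(real\<times>real\<times>real \<Rightarrow> real) \<Rightarrow> real \<Rightarrow> real \<Rightarrow> real \<Rightarrow> real \<Rightarrow> real \<Rightarrow> real" where
  "Dxx F t x u ux uxx = d_x (d_x F) (t,x,u) + 2 * ux * d_u (d_x F) (t,x,u)
      + ux^2 * d_u (d_u F) (t,x,u) + uxx * d_u F (t,x,u)"

definition eta_t where
  "eta_t tau xi eta t x u ut ux =
     Dt1 eta t x u ut - ut * Dt1 tau t x u ut - ux * Dt1 xi t x u ut"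

definition eta_x where
  "eta_x tau xi eta t x u ut ux =
     Dx1 eta t x u ux - ut * Dx1 tau t x u ux - ux * Dx1 xi t x u ux"

definition eta_xx where
  "eta_xx tau xi eta t x u ut ux utx uxx =
     Dxx eta t x u ux uxx - ut * Dxx tau t x u ux uxx - ux * Dxx xi t x u ux uxx
     - 2 * utx * Dx1 tau t x u ux - 2 * uxx * Dx1 xi t x u ux"

text \<open>Q^(2) applied to Delta = u_t + u u_x - A2 u_xx - A1 u_x.\<close>
definition prolonged_action where
  "prolonged_action A1 A2 (V :: real\<times>real\<times>real \<Rightarrow> real\<times>real\<times>real) t x u ut ux utx uxx =
    (let tau = (\<lambda>p. fst (V p)); xi = (\<lambda>p. fst (snd (V p))); eta = (\<lambda>p. snd (snd (V p))) in
       tau (t,x,u) * (- d_t2 A2 (t,x) * uxx - d_t2 A1 (t,x) * ux)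
     + xi (t,x,u) * (- d_x2 A2 (t,x) * uxx - d_x2 A1 (t,x) * ux)
     + eta (t,x,u) * ux
     + eta_t tau xi eta t x u ut ux
     + (u - A1 (t,x)) * eta_x tau xi eta t x u ut ux
     - A2 (t,x) * eta_xx tau xi eta t x u ut ux utx uxx)"

definition Omega :: "(real\<times>real) set \<Rightarrow> (real\<times>real\<times>real) set" where
  "Omega D = {(t,x,u). (t,x) \<in> D}"

definition lie_symmetry where
  "lie_symmetry D A1 A2 V \<longleftrightarrow>
     smooth_on (Omega D) (\<lambda>p. fst (V p)) \<and>
     smooth_on (Omega D) (\<lambda>p. fst (snd (V p))) \<and>
     smooth_on (Omega D) (\<lambda>p. snd (snd (V p))) \<and>
     (\<forall>t x u ut ux utx uxx. (t,x) \<in> D \<longrightarrow>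
        ut + u * ux = A2 (t,x) * uxx + A1 (t,x) * ux \<longrightarrow>
        prolonged_action A1 A2 V t x u ut ux utx uxx = 0)"

end

theory Submission
  imports Defs
begin

lemma basis3: "((1,0,0)::real\<times>real\<times>real) \<in> Basis" "((0,1,0)::real\<times>real\<times>real) \<in> Basis"
  "((0,0,1)::real\<times>real\<times>real) \<in> Basis"
  by (auto simp: Basis_prod_def zero_prod_def)

lemma basis2: "((1,0)::real\<times>real) \<in> Basis" "((0,1)::real\<times>real) \<in> Basis"
  by (auto simp: Basis_prod_def)

lemma smooth_diff: "smooth_on S f \<Longrightarrow> p \<in> S \<Longrightarrow> f differentiable (at p)"
  by (erule smooth_on.cases) auto

lemma smooth_pder: "smooth_on S f \<Longrightarrow> i \<in> Basis \<Longrightarrow> smooth_on S (pder f i)"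
  by (erule smooth_on.cases) auto

lemma line_deriv:
  assumes "f differentiable (at (a + s *\<^sub>R v))"
  shows "((\<lambda>r. f (a + r *\<^sub>R v)) has_real_derivative pder f v (a + s *\<^sub>R v)) (at s)"
proof -
  let ?F = "frechet_derivative f (at (a + s *\<^sub>R v))"
  have F: "(f has_derivative ?F) (at (a + s *\<^sub>R v))"
    using assms frechet_derivative_works by blast
  have g: "((\<lambda>r. a + r *\<^sub>R v) has_derivative (\<lambda>h. h *\<^sub>R v)) (at s)"
    by (auto intro!: derivative_eq_intros)
  have "((\<lambda>r. f (a + r *\<^sub>R v)) has_derivative (\<lambda>h. ?F (h *\<^sub>R v))) (at s)"
    using has_derivative_compose[OF g F] by (simp add: o_def)
  moreover have "linear ?F" using F has_derivative_linear by blast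
  hence "(\<lambda>h. ?F (h *\<^sub>R v)) = (\<lambda>h. h * ?F v)"
    by (auto simp: linear_scale)
  ultimately have "((\<lambda>r. f (a + r *\<^sub>R v)) has_derivative (\<lambda>h. h * ?F v)) (at s)" by simp
  moreover have "(\<lambda>h. h * ?F v) = (*) (?F v)" by (rule ext) (simp add: mult.commute)
  ultimately show ?thesis
    by (simp add: has_field_derivative_def pder_def)
qed

lemma DT3:
  assumes "f differentiable (at (t,x,u))"
  shows "((\<lambda>s. f (s,x,u)) has_real_derivative d_t f (t,x,u)) (at t)"
proof -
  have e: "\<And>r. (0,x,u) + r *\<^sub>R (1,0,0) = (r,x,u)" by simp
  show ?thesis using line_deriv[of f "(0,x,u)" t "(1,0,0)"] assms by (simp add: e)
qed

lemma DX3: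
  assumes "f differentiable (at (t,x,u))"
  shows "((\<lambda>s. f (t,s,u)) has_real_derivative d_x f (t,x,u)) (at x)"
proof -
  have e: "\<And>r. (t,0,u) + r *\<^sub>R (0,1,0) = (t,r,u)" by simp
  show ?thesis using line_deriv[of f "(t,0,u)" x "(0,1,0)"] assms by (simp add: e)
qed

lemma DU3:
  assumes "f differentiable (at (t,x,u))"
  shows "((\<lambda>s. f (t,x,s)) has_real_derivative d_u f (t,x,u)) (at u)"
proof -
  have e: "\<And>r. (t,x,0) + r *\<^sub>R (0,0,1) = (t,x,r)" by simp
  show ?thesis using line_deriv[of f "(t,x,0)" u "(0,0,1)"] assms by (simp add: e)
qed

lemma DT2:
  assumes "f differentiable (at (t,x))"
  shows "((\<lambda>s. f (s,x)) has_real_derivative d_t2 f (t,x)) (at t)"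
proof -
  have e: "\<And>r. (0,x) + r *\<^sub>R (1,0) = (r,x)" by simp
  show ?thesis using line_deriv[of f "(0,x)" t "(1,0)"] assms by (simp add: e)
qed

lemma DX2:
  assumes "f differentiable (at (t,x))"
  shows "((\<lambda>s. f (t,s)) has_real_derivative d_x2 f (t,x)) (at x)"
proof -
  have e: "\<And>r. (t,0) + r *\<^sub>R (0,1) = (t,r)" by simp
  show ?thesis using line_deriv[of f "(t,0)" x "(0,1)"] assms by (simp add: e)
qed

definition "tf V = (\<lambda>p. fst (V p))"
definition "xf V = (\<lambda>p. fst (snd (V p)))"
definition "ef V = (\<lambda>p. snd (snd (V p)))"

lemma PA_unfold:
  "prolonged_action A1 A2 V t x u ut ux utx uxx =
   (let P = (t,x,u); T = tf V; X = xf V; E = ef V in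
       T P * (- d_t2 A2 (t,x) * uxx - d_t2 A1 (t,x) * ux)
     + X P * (- d_x2 A2 (t,x) * uxx - d_x2 A1 (t,x) * ux)
     + E P * ux
     + ((d_t E P + ut * d_u E P) - ut * (d_t T P + ut * d_u T P) - ux * (d_t X P + ut * d_u X P))
     + (u - A1 (t,x)) * ((d_x E P + ux * d_u E P) - ut * (d_x T P + ux * d_u T P) - ux * (d_x X P + ux * d_u X P))
     - A2 (t,x) * (
         (d_x (d_x E) P + 2 * ux * d_u (d_x E) P + ux^2 * d_u (d_u E) P + uxx * d_u E P)
       - ut * (d_x (d_x T) P + 2 * ux * d_u (d_x T) P + ux^2 * d_u (d_u T) P + uxx * d_u T P)
       - ux * (d_x (d_x X) P + 2 * ux * d_u (d_x X) P + ux^2 * d_u (d_u X) P + uxx * d_u X P)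
       - 2 * utx * (d_x T P + ux * d_u T P) - 2 * uxx * (d_x X P + ux * d_u X P)))"
  unfolding prolonged_action_def Let_def eta_t_def eta_x_def eta_xx_def Dt1_def Dx1_def Dxx_def
    tf_def xf_def ef_def by simp

lemma pder_zero_open:
  assumes "open S" "p \<in> S" "\<forall>q\<in>S. g q = 0"
  shows "pder g v p = 0"
proof -
  have "(g has_derivative (\<lambda>h. 0)) (at p)"
    by (rule has_derivative_transform_within_open[of "\<lambda>_. 0" _ _ _ S]) (use assms in auto)
  hence "(\<lambda>h. 0) = frechet_derivative g (at p)" by (rule frechet_derivative_at)
  thus ?thesis unfolding pder_def by (metis)
qed

lemma pder_local:
  assumes "open S" "p \<in> S" "\<forall>q\<in>S. f q = g q"
  shows "pder f v p = pder g v p"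
proof -
  have "\<And>F. (f has_derivative F) (at p) \<longleftrightarrow> (g has_derivative F) (at p)"
    using assms by (metis has_derivative_transform_within_open)
  hence "frechet_derivative f (at p) = frechet_derivative g (at p)"
    unfolding frechet_derivative_def by simp
  thus ?thesis unfolding pder_def by simp
qed

lemma open_Omega: "open D \<Longrightarrow> open (Omega D)"
proof -
  assume "open D"
  have "Omega D = (\<lambda>p. (fst p, fst (snd p))) -` D" by (auto simp: Omega_def)
  moreover have "continuous_on UNIV (\<lambda>p::real\<times>real\<times>real. (fst p, fst (snd p)))"
    by (intro continuous_intros)
  ultimately show ?thesis using \<open>open D\<close> by (simp add: open_vimage)
qed

lemma in_Omega[simp]: "(t,x,u) \<in> Omega D \<longleftrightarrow> (t,x) \<in> D" by (simp add: Omega_def)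

lemma lie_D:
  assumes "lie_symmetry D A1 A2 V"
  shows "smooth_on (Omega D) (tf V)" "smooth_on (Omega D) (xf V)" "smooth_on (Omega D) (ef V)"
    "\<And>t x u ux utx uxx. (t,x) \<in> D \<Longrightarrow>
        prolonged_action A1 A2 V t x u (A2 (t,x) * uxx + A1 (t,x) * ux - u * ux) ux utx uxx = 0"
  using assms unfolding lie_symmetry_def tf_def xf_def ef_def by (auto simp: algebra_simps)

lemma stage1:
  assumes "lie_symmetry D A1 A2 V" "(t,x) \<in> D" "\<forall>p\<in>D. A2 p \<noteq> 0"
  shows "d_x (tf V) (t,x,u) = 0 \<and> d_u (tf V) (t,x,u) = 0"
proof -
  let ?H = "\<lambda>ux utx. prolonged_action A1 A2 V t x u (A2 (t,x) * 0 + A1 (t,x) * ux - u * ux) ux utx 0"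
  have H: "\<And>ux utx. ?H ux utx = 0" using lie_D(4)[OF assms(1,2)] by blast
  have d: "\<And>ux. ?H ux 1 - ?H ux 0 = 2 * A2 (t,x) * (d_x (tf V) (t,x,u) + ux * d_u (tf V) (t,x,u))"
    by (simp add: PA_unfold Let_def algebra_simps)
  have A: "A2 (t,x) \<noteq> 0" using assms by auto
  have 1: "d_x (tf V) (t,x,u) = 0" using d[of 0] H[of 0 1] H[of 0 0] A by simp
  have 2: "d_u (tf V) (t,x,u) = 0" using d[of 1] H[of 1 1] H[of 1 0] A 1 by simp
  show ?thesis using 1 2 by simp
qed

lemma smooth3:
  assumes "smooth_on S f"
  shows "smooth_on S (d_t f)" "smooth_on S (d_x f)" "smooth_on S (d_u f)"
  using smooth_pder[OF assms] basis3 by auto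

lemma smooth2:
  assumes "smooth_on S f"
  shows "smooth_on S (d_t2 f)" "smooth_on S (d_x2 f)"
  using smooth_pder[OF assms] basis2 by auto

lemma open_slice_x: "open (D::(real\<times>real) set) \<Longrightarrow> open {s. (t,s) \<in> D}"
proof -
  assume "open D"
  have "{s. (t,s) \<in> D} = (\<lambda>s. (t,s)) -` D" by auto
  moreover have "open ((\<lambda>s::real. (t,s)) -` D)"
    by (rule continuous_open_vimage[OF \<open>open D\<close>]) (intro continuous_intros)
  ultimately show ?thesis by simp
qed

lemma open_slice_t: "open (D::(real\<times>real) set) \<Longrightarrow> open {s. (s,x) \<in> D}"
proof -
  assume "open D"
  have "{s. (s,x) \<in> D} = (\<lambda>s. (s,x)) -` D" by auto
  moreover have "open ((\<lambda>s::real. (s,x)) -` D)"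
    by (rule continuous_open_vimage[OF \<open>open D\<close>]) (intro continuous_intros)
  ultimately show ?thesis by simp
qed

lemma U0:
  assumes "smooth_on (Omega D) f" "(t,x) \<in> D" "\<And>u. d_u f (t,x,u) = 0"
  shows "f (t,x,u) = f (t,x,0)"
proof -
  have "\<forall>s. ((\<lambda>s. f (t,x,s)) has_real_derivative 0) (at s)"
    using DU3[of f t x] smooth_diff[OF assms(1)] assms(2,3) by (metis in_Omega)
  thus ?thesis using DERIV_isconst_all by blast
qed

lemma U1:
  assumes "open D" "smooth_on (Omega D) f" "(t,x) \<in> D"
    and ind: "\<And>t x u. (t,x) \<in> D \<Longrightarrow> f (t,x,u) = f (t,x,0)"
  shows "d_x f (t,x,u) = d_x f (t,x,0)" "d_t f (t,x,u) = d_t f (t,x,0)" "d_u f (t,x,u) = 0"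
proof -
  have df: "\<And>t x u. (t,x) \<in> D \<Longrightarrow> f differentiable (at (t,x,u))"
    using smooth_diff[OF assms(2)] by auto
  have a: "((\<lambda>s. f (t,s,u)) has_real_derivative d_x f (t,x,u)) (at x)" using DX3 df assms(3) by blast
  have b: "((\<lambda>s. f (t,s,0)) has_real_derivative d_x f (t,x,0)) (at x)" using DX3 df assms(3) by blast
  have "((\<lambda>s. f (t,s,0)) has_real_derivative d_x f (t,x,u)) (at x)"
    by (rule has_field_derivative_transform_within_open[OF a open_slice_x[OF assms(1), of t]])
       (use assms(3) in simp, metis ind mem_Collect_eq)
  thus "d_x f (t,x,u) = d_x f (t,x,0)" using b DERIV_unique by blast
  have a: "((\<lambda>s. f (s,x,u)) has_real_derivative d_t f (t,x,u)) (at t)" using DT3 df assms(3) by blast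
  have b: "((\<lambda>s. f (s,x,0)) has_real_derivative d_t f (t,x,0)) (at t)" using DT3 df assms(3) by blast
  have "((\<lambda>s. f (s,x,0)) has_real_derivative d_t f (t,x,u)) (at t)"
    by (rule has_field_derivative_transform_within_open[OF a open_slice_t[OF assms(1), of x]])
       (use assms(3) in simp, metis ind mem_Collect_eq)
  thus "d_t f (t,x,u) = d_t f (t,x,0)" using b DERIV_unique by blast
  have a: "((\<lambda>s. f (t,x,s)) has_real_derivative d_u f (t,x,u)) (at u)" using DU3 df assms(3) by blast
  have "((\<lambda>s. f (t,x,0)) has_real_derivative d_u f (t,x,u)) (at u)"
    by (rule has_field_derivative_transform_within_open[OF a, of UNIV]) (auto, metis ind assms(3))
  thus "d_u f (t,x,u) = 0" using DERIV_const DERIV_unique by blast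
qed

locale sym =
  fixes D :: "(real\<times>real) set" and A1 A2 :: "real\<times>real \<Rightarrow> real" and V :: "real\<times>real\<times>real \<Rightarrow> real\<times>real\<times>real"
  assumes oD: "open D" and A2nz: "\<forall>p\<in>D. A2 p \<noteq> 0" and ls: "lie_symmetry D A1 A2 V"
begin

abbreviation "T \<equiv> tf V"
abbreviation "X \<equiv> xf V"
abbreviation "E \<equiv> ef V"

lemma smT: "smooth_on (Omega D) T" and smX: "smooth_on (Omega D) X" and smE: "smooth_on (Omega D) E"
  using lie_D[OF ls] by auto

lemma oO: "open (Omega D)" using open_Omega[OF oD] .

lemma PA0: "(t,x) \<in> D \<Longrightarrow>
        prolonged_action A1 A2 V t x u (A2 (t,x) * uxx + A1 (t,x) * ux - u * ux) ux utx uxx = 0"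
  using lie_D(4)[OF ls] by blast

lemma F1: "(t,x) \<in> D \<Longrightarrow> d_x T (t,x,u) = 0 \<and> d_u T (t,x,u) = 0"
  using stage1[OF ls _ A2nz] by blast

lemma F1a: "(t,x) \<in> D \<Longrightarrow> d_x (d_x T) (t,x,u) = 0 \<and> d_u (d_x T) (t,x,u) = 0 \<and> d_u (d_u T) (t,x,u) = 0"
proof -
  assume a: "(t,x) \<in> D"
  have z1: "\<forall>q\<in>Omega D. d_x T q = 0" using F1 by (auto simp: Omega_def)
  have z2: "\<forall>q\<in>Omega D. d_u T q = 0" using F1 by (auto simp: Omega_def)
  show ?thesis using pder_zero_open[OF oO _ z1] pder_zero_open[OF oO _ z2] a by simp
qed

lemma F2: assumes a: "(t,x) \<in> D" shows "d_u X (t,x,u) = 0"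
proof -
  let ?Q = "\<lambda>ux uxx. prolonged_action A1 A2 V t x u (A2 (t,x) * uxx + A1 (t,x) * ux - u * ux) ux 0 uxx"
  have Q: "\<And>ux uxx. ?Q ux uxx = 0" using PA0[OF a] by blast
  have z: "d_x T (t,x,u) = 0" "d_u T (t,x,u) = 0" "d_x (d_x T) (t,x,u) = 0" "d_u (d_x T) (t,x,u) = 0"
     "d_u (d_u T) (t,x,u) = 0" using F1[OF a] F1a[OF a] by auto
  have "?Q 1 1 - ?Q 1 0 - ?Q 0 1 + ?Q 0 0 = 2 * A2 (t,x) * d_u X (t,x,u)"
    by (simp add: PA_unfold Let_def z algebra_simps power2_eq_square)
  thus ?thesis using Q[where ux="1" and uxx="1"] Q[where ux="1" and uxx="0"] Q[where ux="0" and uxx="1"] Q[where ux="0" and uxx="0"] A2nz a by simp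
qed

lemma Xind: "(t,x) \<in> D \<Longrightarrow> X (t,x,u) = X (t,x,0)"
  using U0[OF smX] F2 by blast

lemma F2a: assumes a: "(t,x) \<in> D" shows "d_u (d_u X) (t,x,u) = 0" "d_u (d_x X) (t,x,u) = 0"
proof -
  have z1: "\<forall>q\<in>Omega D. d_u X q = 0" using F2 by (auto simp: Omega_def)
  show "d_u (d_u X) (t,x,u) = 0" using pder_zero_open[OF oO _ z1] a by simp
  have "\<And>t x u. (t,x) \<in> D \<Longrightarrow> d_x X (t,x,u) = d_x X (t,x,0)"
    using U1(1)[OF oD smX _ Xind] by blast
  thus "d_u (d_x X) (t,x,u) = 0" using U1(3)[OF oD smooth3(2)[OF smX] a] by blast
qed

lemma F3: assumes a: "(t,x) \<in> D" shows "d_u (d_u E) (t,x,u) = 0"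
proof -
  let ?Q = "\<lambda>ux uxx. prolonged_action A1 A2 V t x u (A2 (t,x) * uxx + A1 (t,x) * ux - u * ux) ux 0 uxx"
  have Q: "\<And>ux uxx. ?Q ux uxx = 0" using PA0[OF a] by blast
  have z: "d_x T (t,x,u) = 0" "d_u T (t,x,u) = 0" "d_x (d_x T) (t,x,u) = 0" "d_u (d_x T) (t,x,u) = 0"
     "d_u (d_u T) (t,x,u) = 0" "d_u X (t,x,u) = 0" "d_u (d_u X) (t,x,u) = 0" "d_u (d_x X) (t,x,u) = 0"
    using F1[OF a] F1a[OF a] F2[OF a] F2a[OF a] by auto
  have "?Q 1 0 + ?Q (-1) 0 - 2 * ?Q 0 0 = - 2 * A2 (t,x) * d_u (d_u E) (t,x,u)"
    by (simp add: PA_unfold Let_def z algebra_simps power2_eq_square)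
  thus ?thesis using Q[where ux="1" and uxx="0"] Q[where ux="-1" and uxx="0"] Q[where ux="0" and uxx="0"] A2nz a by simp
qed

lemma F456: assumes a: "(t,x) \<in> D" shows
  "- T (t,x,u) * d_t2 A2 (t,x) - X (t,x,u) * d_x2 A2 (t,x) - A2 (t,x) * d_t T (t,x,u)
     + 2 * A2 (t,x) * d_x X (t,x,u) = 0"
  "- T (t,x,u) * d_t2 A1 (t,x) - X (t,x,u) * d_x2 A1 (t,x) + E (t,x,u)
     + (A1 (t,x) - u) * (d_u E (t,x,u) - d_t T (t,x,u)) - d_t X (t,x,u)
     + (u - A1 (t,x)) * (d_u E (t,x,u) - d_x X (t,x,u))
     - A2 (t,x) * (2 * d_u (d_x E) (t,x,u) - d_x (d_x X) (t,x,u)) = 0"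
  "d_t E (t,x,u) + (u - A1 (t,x)) * d_x E (t,x,u) - A2 (t,x) * d_x (d_x E) (t,x,u) = 0"
proof -
  let ?Q = "\<lambda>ux uxx. prolonged_action A1 A2 V t x u (A2 (t,x) * uxx + A1 (t,x) * ux - u * ux) ux 0 uxx"
  have Q: "\<And>ux uxx. ?Q ux uxx = 0" using PA0[OF a] by blast
  have z: "d_x T (t,x,u) = 0" "d_u T (t,x,u) = 0" "d_x (d_x T) (t,x,u) = 0" "d_u (d_x T) (t,x,u) = 0"
     "d_u (d_u T) (t,x,u) = 0" "d_u X (t,x,u) = 0" "d_u (d_u X) (t,x,u) = 0" "d_u (d_x X) (t,x,u) = 0"
     "d_u (d_u E) (t,x,u) = 0"
    using F1[OF a] F1a[OF a] F2[OF a] F2a[OF a] F3[OF a] by auto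
  have "?Q 0 1 - ?Q 0 0 = - T (t,x,u) * d_t2 A2 (t,x) - X (t,x,u) * d_x2 A2 (t,x) - A2 (t,x) * d_t T (t,x,u)
     + 2 * A2 (t,x) * d_x X (t,x,u)"
    by (simp add: PA_unfold Let_def z algebra_simps power2_eq_square)
  thus "- T (t,x,u) * d_t2 A2 (t,x) - X (t,x,u) * d_x2 A2 (t,x) - A2 (t,x) * d_t T (t,x,u)
     + 2 * A2 (t,x) * d_x X (t,x,u) = 0" using Q[where ux="0" and uxx="1"] Q[where ux="0" and uxx="0"] by simp
  have "?Q 1 0 - ?Q (-1) 0 = 2 * (- T (t,x,u) * d_t2 A1 (t,x) - X (t,x,u) * d_x2 A1 (t,x) + E (t,x,u)
     + (A1 (t,x) - u) * (d_u E (t,x,u) - d_t T (t,x,u)) - d_t X (t,x,u)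
     + (u - A1 (t,x)) * (d_u E (t,x,u) - d_x X (t,x,u))
     - A2 (t,x) * (2 * d_u (d_x E) (t,x,u) - d_x (d_x X) (t,x,u)))"
    by (simp add: PA_unfold Let_def z algebra_simps power2_eq_square)
  thus "- T (t,x,u) * d_t2 A1 (t,x) - X (t,x,u) * d_x2 A1 (t,x) + E (t,x,u)
     + (A1 (t,x) - u) * (d_u E (t,x,u) - d_t T (t,x,u)) - d_t X (t,x,u)
     + (u - A1 (t,x)) * (d_u E (t,x,u) - d_x X (t,x,u))
     - A2 (t,x) * (2 * d_u (d_x E) (t,x,u) - d_x (d_x X) (t,x,u)) = 0" using Q[where ux="1" and uxx="0"] Q[where ux="-1" and uxx="0"] by simp
  have "?Q 0 0 = d_t E (t,x,u) + (u - A1 (t,x)) * d_x E (t,x,u) - A2 (t,x) * d_x (d_x E) (t,x,u)"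
    by (simp add: PA_unfold Let_def z algebra_simps power2_eq_square)
  thus "d_t E (t,x,u) + (u - A1 (t,x)) * d_x E (t,x,u) - A2 (t,x) * d_x (d_x E) (t,x,u) = 0" using Q[where ux="0" and uxx="0"] by simp
qed

end

lemma deriv_eq_open:
  fixes f g :: "real \<Rightarrow> real"
  assumes "(f has_real_derivative a) (at t)" "(g has_real_derivative b) (at t)" "open S" "t \<in> S"
    "\<And>s. s \<in> S \<Longrightarrow> f s = g s"
  shows "a = b"
proof -
  have "(g has_real_derivative a) (at t)"
    by (rule has_field_derivative_transform_within_open[OF assms(1,3,4)]) (use assms(5) in auto)
  thus ?thesis using assms(2) DERIV_unique by blast
qed

lemma const_int:
  fixes f :: "real \<Rightarrow> real"
  assumes "\<And>s. s \<in> {a<..<b} \<Longrightarrow> (f has_real_derivative 0) (at s)" "x \<in> {a<..<b}" "y \<in> {a<..<b}"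
  shows "f x = f y"
  using DERIV_isconst3[of a b x y f] assms by auto

definition RF where
  "RF A1 A2 t0 x0 \<delta> W Tf T1f T2f bf b1f k c \<longleftrightarrow>
    (\<forall>t\<in>{t0-\<delta><..<t0+\<delta>}. (Tf has_real_derivative T1f t) (at t) \<and> (T1f has_real_derivative T2f t) (at t)
       \<and> (bf has_real_derivative b1f t) (at t)) \<and>
    (\<forall>t\<in>{t0-\<delta><..<t0+\<delta>}. \<forall>x\<in>{x0-\<delta><..<x0+\<delta>}. \<forall>u.
        W (t,x,u) = (Tf t, (T1f t + k) * x + bf t, k * u + c)) \<and>
    (\<forall>t\<in>{t0-\<delta><..<t0+\<delta>}. \<forall>x\<in>{x0-\<delta><..<x0+\<delta>}.
        T2f t * x + b1f t + Tf t * d_t2 A1 (t,x) + ((T1f t + k) * x + bf t) * d_x2 A1 (t,x)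
          - k * A1 (t,x) - c = 0 \<and>
        (T1f t + 2 * k) * A2 (t,x) - Tf t * d_t2 A2 (t,x) - ((T1f t + k) * x + bf t) * d_x2 A2 (t,x) = 0)"

lemma sdiff: "smooth_on (Omega D) f \<Longrightarrow> (t,x) \<in> D \<Longrightarrow> f differentiable (at (t,x,u))"
  using smooth_diff by fastforce

lemma DT3e: "f differentiable (at (t,x,u)) \<Longrightarrow> D = d_t f (t,x,u) \<Longrightarrow> ((\<lambda>s. f (s,x,u)) has_real_derivative D) (at t)"
  using DT3 by blast
lemma DX3e: "f differentiable (at (t,x,u)) \<Longrightarrow> D = d_x f (t,x,u) \<Longrightarrow> ((\<lambda>s. f (t,s,u)) has_real_derivative D) (at x)"
  using DX3 by blast
lemma DU3e: "f differentiable (at (t,x,u)) \<Longrightarrow> D = d_u f (t,x,u) \<Longrightarrow> ((\<lambda>s. f (t,x,s)) has_real_derivative D) (at u)"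
  using DU3 by blast
lemma DT2e: "f differentiable (at (t,x)) \<Longrightarrow> D = d_t2 f (t,x) \<Longrightarrow> ((\<lambda>s. f (s,x)) has_real_derivative D) (at t)"
  using DT2 by blast
lemma DX2e: "f differentiable (at (t,x)) \<Longrightarrow> D = d_x2 f (t,x) \<Longrightarrow> ((\<lambda>s. f (t,s)) has_real_derivative D) (at x)"
  using DX2 by blast

context sym begin

lemma dT: "(t,x) \<in> D \<Longrightarrow> T differentiable (at (t,x,u))" using sdiff[OF smT] .
lemma dX: "(t,x) \<in> D \<Longrightarrow> X differentiable (at (t,x,u))" using sdiff[OF smX] .
lemma dE: "(t,x) \<in> D \<Longrightarrow> E differentiable (at (t,x,u))" using sdiff[OF smE] .

lemma Tind: "(t,x) \<in> D \<Longrightarrow> T (t,x,u) = T (t,x,0)"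
  using U0[OF smT] F1 by blast

lemma EuInd: "(t,x) \<in> D \<Longrightarrow> d_u E (t,x,u) = d_u E (t,x,0)"
  using U0[OF smooth3(3)[OF smE]] F3 by blast

lemma Eaff: assumes a: "(t,x) \<in> D" shows "E (t,x,u) = E (t,x,0) + u * d_u E (t,x,0)"
proof -
  have "\<forall>s. ((\<lambda>s. E (t,x,s) - s * d_u E (t,x,0)) has_real_derivative 0) (at s)"
  proof
    fix s
    have "((\<lambda>s. E (t,x,s) - s * d_u E (t,x,0)) has_real_derivative (d_u E (t,x,s) - 1 * d_u E (t,x,0))) (at s)"
      by (intro derivative_eq_intros DU3e dE a) auto
    thus "((\<lambda>s. E (t,x,s) - s * d_u E (t,x,0)) has_real_derivative 0) (at s)" using EuInd[OF a, of s] by simp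
  qed
  from DERIV_isconst_all[OF this, of u 0] show ?thesis by simp
qed

lemma ExU: assumes a: "(t,x) \<in> D" shows "d_x E (t,x,u) = d_x E (t,x,0) + u * d_x (d_u E) (t,x,0)"
proof -
  have 1: "((\<lambda>r. E (t,r,u)) has_real_derivative d_x E (t,x,u)) (at x)" by (intro DX3 dE a)
  have 2: "((\<lambda>r. E (t,r,0) + u * d_u E (t,r,0)) has_real_derivative d_x E (t,x,0) + u * d_x (d_u E) (t,x,0)) (at x)"
    by (intro derivative_eq_intros DX3e dE a sdiff[OF smooth3(3)[OF smE]]) auto
  show ?thesis by (rule deriv_eq_open[OF 1 2 open_slice_x[OF oD, of t]]) (simp add: a, metis Eaff mem_Collect_eq)
qed

lemma ExuU: assumes a: "(t,x) \<in> D" shows "d_u (d_x E) (t,x,u) = d_x (d_u E) (t,x,0)"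
proof -
  have 1: "((\<lambda>r. d_x E (t,x,r)) has_real_derivative d_u (d_x E) (t,x,u)) (at u)"
    by (intro DU3 a sdiff[OF smooth3(2)[OF smE]])
  have 2: "((\<lambda>r. d_x E (t,x,0) + r * d_x (d_u E) (t,x,0)) has_real_derivative 0 + 1 * d_x (d_u E) (t,x,0)) (at u)"
    by (intro derivative_eq_intros) auto
  have "d_u (d_x E) (t,x,u) = 0 + 1 * d_x (d_u E) (t,x,0)"
    by (rule deriv_eq_open[OF 1 2 open_UNIV]) (simp, metis ExU a)
  thus ?thesis by simp
qed

lemma EtU: assumes a: "(t,x) \<in> D" shows "d_t E (t,x,u) = d_t E (t,x,0) + u * d_t (d_u E) (t,x,0)"
proof -
  have 1: "((\<lambda>r. E (r,x,u)) has_real_derivative d_t E (t,x,u)) (at t)" by (intro DT3 dE a)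
  have 2: "((\<lambda>r. E (r,x,0) + u * d_u E (r,x,0)) has_real_derivative d_t E (t,x,0) + u * d_t (d_u E) (t,x,0)) (at t)"
    by (intro derivative_eq_intros DT3e dE a sdiff[OF smooth3(3)[OF smE]]) auto
  show ?thesis by (rule deriv_eq_open[OF 1 2 open_slice_t[OF oD, of x]]) (simp add: a, metis Eaff mem_Collect_eq)
qed

lemma ExxU: assumes a: "(t,x) \<in> D" shows "d_x (d_x E) (t,x,u) = d_x (d_x E) (t,x,0) + u * d_x (d_x (d_u E)) (t,x,0)"
proof -
  have 1: "((\<lambda>r. d_x E (t,r,u)) has_real_derivative d_x (d_x E) (t,x,u)) (at x)"
    by (intro DX3 a sdiff[OF smooth3(2)[OF smE]])
  have 2: "((\<lambda>r. d_x E (t,r,0) + u * d_x (d_u E) (t,r,0)) has_real_derivative d_x (d_x E) (t,x,0) + u * d_x (d_x (d_u E)) (t,x,0)) (at x)"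
    by (intro derivative_eq_intros DX3e a sdiff[OF smooth3(2)[OF smE]] sdiff[OF smooth3(2)[OF smooth3(3)[OF smE]]]) auto
  show ?thesis by (rule deriv_eq_open[OF 1 2 open_slice_x[OF oD, of t]]) (simp add: a, metis ExU mem_Collect_eq)
qed

lemma TtU: "(t,x) \<in> D \<Longrightarrow> d_t T (t,x,u) = d_t T (t,x,0)"
  using U1(2)[OF oD smT _ Tind] by blast
lemma XtU: "(t,x) \<in> D \<Longrightarrow> d_t X (t,x,u) = d_t X (t,x,0)"
  using U1(2)[OF oD smX _ Xind] by blast
lemma XxU: "(t,x) \<in> D \<Longrightarrow> d_x X (t,x,u) = d_x X (t,x,0)"
  using U1(1)[OF oD smX _ Xind] by blast
lemma XxxU: "(t,x) \<in> D \<Longrightarrow> d_x (d_x X) (t,x,u) = d_x (d_x X) (t,x,0)"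
  using U1(1)[OF oD smooth3(2)[OF smX] _ XxU] by blast

lemma G1: assumes a: "(t,x) \<in> D" shows "d_u E (t,x,0) = d_x X (t,x,0) - d_t T (t,x,0)"
proof -
  note h1 = F456(2)[OF a, of 1] and h0 = F456(2)[OF a, of 0]
  have r: "T (t,x,1) = T (t,x,0)" "X (t,x,1) = X (t,x,0)" "E (t,x,1) = E (t,x,0) + d_u E (t,x,0)"
    "d_u E (t,x,1) = d_u E (t,x,0)" "d_t T (t,x,1) = d_t T (t,x,0)" "d_t X (t,x,1) = d_t X (t,x,0)"
    "d_x X (t,x,1) = d_x X (t,x,0)" "d_u (d_x E) (t,x,1) = d_x (d_u E) (t,x,0)"
    "d_u (d_x E) (t,x,0) = d_x (d_u E) (t,x,0)" "d_x (d_x X) (t,x,1) = d_x (d_x X) (t,x,0)"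
    using Tind[OF a, of 1] Xind[OF a, of 1] Eaff[OF a, of 1] EuInd[OF a, of 1] TtU[OF a, of 1]
      XtU[OF a, of 1] XxU[OF a, of 1] ExuU[OF a, of 1] ExuU[OF a, of 0] XxxU[OF a, of 1]
    by simp_all
  have "0 = (- T (t,x,1) * d_t2 A1 (t,x) - X (t,x,1) * d_x2 A1 (t,x) + E (t,x,1)
     + (A1 (t,x) - 1) * (d_u E (t,x,1) - d_t T (t,x,1)) - d_t X (t,x,1)
     + (1 - A1 (t,x)) * (d_u E (t,x,1) - d_x X (t,x,1))
     - A2 (t,x) * (2 * d_u (d_x E) (t,x,1) - d_x (d_x X) (t,x,1)))
     - (- T (t,x,0) * d_t2 A1 (t,x) - X (t,x,0) * d_x2 A1 (t,x) + E (t,x,0)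
     + (A1 (t,x) - 0) * (d_u E (t,x,0) - d_t T (t,x,0)) - d_t X (t,x,0)
     + (0 - A1 (t,x)) * (d_u E (t,x,0) - d_x X (t,x,0))
     - A2 (t,x) * (2 * d_u (d_x E) (t,x,0) - d_x (d_x X) (t,x,0)))" using h1 h0 by simp
  also have "\<dots> = d_u E (t,x,0) + d_t T (t,x,0) - d_x X (t,x,0)"
    unfolding r by (simp add: algebra_simps)
  finally show ?thesis by simp
qed

lemma G3: assumes a: "(t,x) \<in> D" shows "d_x (d_u E) (t,x,0) = 0"
proof -
  have h: "\<And>u. d_t E (t,x,u) + (u - A1 (t,x)) * d_x E (t,x,u) - A2 (t,x) * d_x (d_x E) (t,x,u) = 0"
    using F456(3)[OF a] by blast
  have "0 = (d_t E (t,x,1) + (1 - A1 (t,x)) * d_x E (t,x,1) - A2 (t,x) * d_x (d_x E) (t,x,1))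
      + (d_t E (t,x,-1) + (-1 - A1 (t,x)) * d_x E (t,x,-1) - A2 (t,x) * d_x (d_x E) (t,x,-1))
      - 2 * (d_t E (t,x,0) + (0 - A1 (t,x)) * d_x E (t,x,0) - A2 (t,x) * d_x (d_x E) (t,x,0))"
    using h[of 1] h[of "-1"] h[of 0] by simp
  also have "\<dots> = 2 * d_x (d_u E) (t,x,0)"
    unfolding EtU[OF a, of 1] EtU[OF a, of "-1"] ExU[OF a, of 1] ExU[OF a, of "-1"]
      ExxU[OF a, of 1] ExxU[OF a, of "-1"] by (simp add: algebra_simps)
  finally show ?thesis by simp
qed

lemma G3a: assumes a: "(t,x) \<in> D" shows "d_x (d_u E) (t,x,u) = 0" "d_x (d_x (d_u E)) (t,x,u) = 0"
proof -
  have z: "\<forall>q\<in>Omega D. d_x (d_u E) q = 0"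
  proof
    fix q assume q: "q \<in> Omega D"
    obtain t' x' u' where qq: "q = (t',x',u')" by (cases q) auto
    have "(t',x') \<in> D" using q qq by simp
    thus "d_x (d_u E) q = 0" using U1(1)[OF oD smooth3(3)[OF smE] _ EuInd] G3 qq by metis
  qed
  thus "d_x (d_u E) (t,x,u) = 0" using a by simp
  show "d_x (d_x (d_u E)) (t,x,u) = 0" using pder_zero_open[OF oO _ z] a by simp
qed

lemma G4: assumes a: "(t,x) \<in> D" shows "d_t (d_u E) (t,x,0) + d_x E (t,x,0) = 0"
proof -
  have h: "\<And>u. d_t E (t,x,u) + (u - A1 (t,x)) * d_x E (t,x,u) - A2 (t,x) * d_x (d_x E) (t,x,u) = 0"
    using F456(3)[OF a] by blast
  have "0 = (d_t E (t,x,1) + (1 - A1 (t,x)) * d_x E (t,x,1) - A2 (t,x) * d_x (d_x E) (t,x,1))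
      - (d_t E (t,x,-1) + (-1 - A1 (t,x)) * d_x E (t,x,-1) - A2 (t,x) * d_x (d_x E) (t,x,-1))"
    using h[of 1] h[of "-1"] by simp
  also have "\<dots> = 2 * (d_t (d_u E) (t,x,0) + d_x E (t,x,0))"
    unfolding EtU[OF a, of 1] EtU[OF a, of "-1"] ExU[OF a, of 1] ExU[OF a, of "-1"]
      ExxU[OF a, of 1] ExxU[OF a, of "-1"] G3[OF a] G3a[OF a] by (simp add: algebra_simps)
  finally show ?thesis by simp
qed

lemma G5: assumes a: "(t,x) \<in> D" shows "d_t E (t,x,0) - A1 (t,x) * d_x E (t,x,0) - A2 (t,x) * d_x (d_x E) (t,x,0) = 0"
  using F456(3)[OF a, of 0] by simp

lemma G2: assumes a: "(t,x) \<in> D" shows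
  "- T (t,x,0) * d_t2 A1 (t,x) - X (t,x,0) * d_x2 A1 (t,x) + E (t,x,0)
     + A1 (t,x) * (d_x X (t,x,0) - d_t T (t,x,0)) - d_t X (t,x,0)
     + A2 (t,x) * d_x (d_x X) (t,x,0) = 0"
proof -
  note h0 = F456(2)[OF a, of 0]
  have r: "d_u (d_x E) (t,x,0) = 0" using ExuU[OF a, of 0] G3[OF a] by simp
  show ?thesis using h0 unfolding r by (simp add: algebra_simps)
qed

end

locale symbox = sym +
  fixes t0 x0 \<delta> :: real
  assumes dpos: "\<delta> > 0"
    and boxD: "\<And>t x. t \<in> {t0-\<delta><..<t0+\<delta>} \<Longrightarrow> x \<in> {x0-\<delta><..<x0+\<delta>} \<Longrightarrow> (t,x) \<in> D"
    and smA1: "smooth_on D A1" and A1xx: "\<forall>p\<in>D. d_x2 (d_x2 A1) p \<noteq> 0"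
begin

abbreviation "II \<equiv> {t0-\<delta><..<t0+\<delta>}"
abbreviation "JJ \<equiv> {x0-\<delta><..<x0+\<delta>}"

lemma t0I: "t0 \<in> II" and x0J: "x0 \<in> JJ" using dpos by auto

definition "Tf t = T (t,x0,0)"
definition "T1f t = d_t T (t,x0,0)"
definition "T2f t = d_t (d_t T) (t,x0,0)"
definition "ee t = d_u E (t,x0,0)"
definition "e1f t = d_t (d_u E) (t,x0,0)"
definition "e2f t = d_t (d_t (d_u E)) (t,x0,0)"
definition "hh t = E (t,x0,0)"

lemma inD: "t \<in> II \<Longrightarrow> x \<in> JJ \<Longrightarrow> (t,x) \<in> D" using boxD by blast
lemma inD0: "t \<in> II \<Longrightarrow> (t,x0) \<in> D" using boxD x0J by blast

lemma Tbox: assumes t: "t \<in> II" and x: "x \<in> JJ" shows "T (t,x,u) = Tf t"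
proof -
  have "T (t,x,0) = T (t,x0,0)"
  proof (rule const_int[OF _ x x0J])
    fix s assume s: "s \<in> JJ"
    show "((\<lambda>r. T (t,r,0)) has_real_derivative 0) (at s)"
      by (rule DX3e[OF dT]) (use F1 inD[OF t s] in auto)
  qed
  thus ?thesis using Tind[OF inD[OF t x]] unfolding Tf_def by simp
qed

lemma dTf: "t \<in> II \<Longrightarrow> (Tf has_real_derivative T1f t) (at t)"
  unfolding Tf_def T1f_def by (rule DT3e[OF dT[OF inD0]]) auto
lemma dT1f: "t \<in> II \<Longrightarrow> (T1f has_real_derivative T2f t) (at t)"
  unfolding T2f_def T1f_def by (rule DT3e[OF sdiff[OF smooth3(1)[OF smT] inD0]]) auto
lemma dee: "t \<in> II \<Longrightarrow> (ee has_real_derivative e1f t) (at t)"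
  unfolding ee_def e1f_def by (rule DT3e[OF sdiff[OF smooth3(3)[OF smE] inD0]]) auto
lemma de1f: "t \<in> II \<Longrightarrow> (e1f has_real_derivative e2f t) (at t)"
  unfolding e2f_def e1f_def by (rule DT3e[OF sdiff[OF smooth3(1)[OF smooth3(3)[OF smE]] inD0]]) auto
lemma dhh: "t \<in> II \<Longrightarrow> (hh has_real_derivative d_t E (t,x0,0)) (at t)"
  unfolding hh_def by (rule DT3e[OF dE[OF inD0]]) auto

lemma Ttbox: assumes t: "t \<in> II" and x: "x \<in> JJ" shows "d_t T (t,x,u) = T1f t"
proof -
  have 1: "((\<lambda>s. T (s,x,0)) has_real_derivative d_t T (t,x,0)) (at t)"
    by (rule DT3e[OF dT[OF inD[OF t x]]]) auto
  have "d_t T (t,x,0) = T1f t"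
    by (rule deriv_eq_open[OF 1 dTf[OF t] _ t]) (auto simp: Tbox[OF _ x])
  thus ?thesis using TtU[OF inD[OF t x]] by simp
qed

lemma eebox: assumes t: "t \<in> II" and x: "x \<in> JJ" shows "d_u E (t,x,u) = ee t"
proof -
  have "d_u E (t,x,0) = d_u E (t,x0,0)"
  proof (rule const_int[OF _ x x0J])
    fix s assume s: "s \<in> JJ"
    show "((\<lambda>r. d_u E (t,r,0)) has_real_derivative 0) (at s)"
      by (rule DX3e[OF sdiff[OF smooth3(3)[OF smE] inD[OF t s]]]) (use G3a inD[OF t s] in auto)
  qed
  thus ?thesis using EuInd[OF inD[OF t x]] unfolding ee_def by simp
qed

lemma e1tbox: assumes t: "t \<in> II" and x: "x \<in> JJ" shows "d_t (d_u E) (t,x,0) = e1f t"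
proof -
  have 1: "((\<lambda>s. d_u E (s,x,0)) has_real_derivative d_t (d_u E) (t,x,0)) (at t)"
    by (rule DT3e[OF sdiff[OF smooth3(3)[OF smE] inD[OF t x]]]) auto
  show ?thesis
    by (rule deriv_eq_open[OF 1 dee[OF t] _ t]) (auto simp: eebox[OF _ x])
qed

lemma Xxbox0: assumes t: "t \<in> II" and x: "x \<in> JJ" shows "d_x X (t,x,0) = ee t + T1f t"
  using G1[OF inD[OF t x]] eebox[OF t x, of 0] Ttbox[OF t x, of 0] by simp

lemma E0xbox: assumes t: "t \<in> II" and x: "x \<in> JJ" shows "d_x E (t,x,0) = - e1f t"
  using G4[OF inD[OF t x]] e1tbox[OF t x] by simp

lemma E0box: assumes t: "t \<in> II" and x: "x \<in> JJ" shows "E (t,x,0) = hh t - e1f t * (x - x0)"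
proof -
  have "E (t,x,0) + e1f t * x = E (t,x0,0) + e1f t * x0"
  proof (rule const_int[where f = "\<lambda>r. E (t,r,0) + e1f t * r", OF _ x x0J])
    fix s assume s: "s \<in> JJ"
    show "((\<lambda>r. E (t,r,0) + e1f t * r) has_real_derivative 0) (at s)"
      by (intro derivative_eq_intros DX3e[OF dE[OF inD[OF t s]]]) (auto simp: E0xbox[OF t s])
  qed
  thus ?thesis unfolding hh_def by (simp add: algebra_simps)
qed

lemma E0xxbox: assumes t: "t \<in> II" and x: "x \<in> JJ" shows "d_x (d_x E) (t,x,0) = 0"
proof -
  have 1: "((\<lambda>r. d_x E (t,r,0)) has_real_derivative d_x (d_x E) (t,x,0)) (at x)"
    by (rule DX3e[OF sdiff[OF smooth3(2)[OF smE] inD[OF t x]]]) auto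
  have 2: "((\<lambda>r. - e1f t) has_real_derivative 0) (at x)" by simp
  show ?thesis by (rule deriv_eq_open[OF 1 2 _ x]) (auto simp: E0xbox[OF t])
qed

lemma E0tbox: assumes t: "t \<in> II" and x: "x \<in> JJ" shows "d_t E (t,x,0) = - A1 (t,x) * e1f t"
  using G5[OF inD[OF t x]] E0xbox[OF t x] E0xxbox[OF t x] by simp

lemma G6: assumes t: "t \<in> II" and x: "x \<in> JJ"
  shows "- A1 (t,x) * e1f t = - A1 (t,x0) * e1f t - e2f t * (x - x0)"
proof -
  have 1: "((\<lambda>s. E (s,x,0)) has_real_derivative d_t E (t,x,0)) (at t)"
    by (rule DT3e[OF dE[OF inD[OF t x]]]) auto
  have 2: "((\<lambda>s. hh s - e1f s * (x - x0)) has_real_derivative d_t E (t,x0,0) - e2f t * (x - x0)) (at t)"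
    by (intro derivative_eq_intros dhh[OF t] de1f[OF t]) (auto intro: dhh[OF t] de1f[OF t])
  have "d_t E (t,x,0) = d_t E (t,x0,0) - e2f t * (x - x0)"
    by (rule deriv_eq_open[OF 1 2 _ t]) (auto simp: E0box[OF _ x])
  thus ?thesis using E0tbox[OF t x] E0tbox[OF t x0J] by simp
qed

lemma dA1: "(t,x) \<in> D \<Longrightarrow> A1 differentiable (at (t,x))" using smooth_diff[OF smA1] .
lemma dA1x: "(t,x) \<in> D \<Longrightarrow> d_x2 A1 differentiable (at (t,x))" using smooth_diff[OF smooth2(2)[OF smA1]] .

lemma e1f_zero: assumes t: "t \<in> II" shows "e1f t = 0"
proof -
  have s1: "d_x2 A1 (t,r) * e1f t - e2f t = 0" if r: "r \<in> JJ" for r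
  proof -
    have 1: "((\<lambda>r. A1 (t,r) * e1f t - A1 (t,x0) * e1f t - e2f t * (r - x0)) has_real_derivative
        d_x2 A1 (t,r) * e1f t - e2f t) (at r)"
      by (intro derivative_eq_intros DX2e[OF dA1[OF inD[OF t r]]]) auto
    have 2: "((\<lambda>r. 0) has_real_derivative 0) (at r)" by simp
    have "d_x2 A1 (t,r) * e1f t - e2f t = 0"
    proof (rule deriv_eq_open[OF 1 2 _ r])
      show "open JJ" by simp
      fix s assume s: "s \<in> JJ"
      show "A1 (t,s) * e1f t - A1 (t,x0) * e1f t - e2f t * (s - x0) = 0"
        using G6[OF t s] by (simp add: algebra_simps)
    qed
    thus ?thesis .
  qed
  have 1: "((\<lambda>r. d_x2 A1 (t,r) * e1f t - e2f t) has_real_derivative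
        d_x2 (d_x2 A1) (t,x0) * e1f t) (at x0)"
    by (intro derivative_eq_intros DX2e[OF dA1x[OF inD0[OF t]]]) auto
  have 2: "((\<lambda>r. 0) has_real_derivative 0) (at x0)" by simp
  have "d_x2 (d_x2 A1) (t,x0) * e1f t = 0"
    by (rule deriv_eq_open[OF 1 2 _ x0J]) (auto simp: s1)
  thus ?thesis using A1xx inD0[OF t] by simp
qed

definition "kk = ee t0"
definition "cc = hh t0"
definition "bf t = X (t,x0,0) - (kk + T1f t) * x0"
definition "b1f t = d_t X (t,x0,0) - T2f t * x0"

lemma eeconst: "t \<in> II \<Longrightarrow> ee t = kk"
  unfolding kk_def by (rule const_int[OF _ _ t0I]) (use dee e1f_zero in auto)

lemma hhconst: "t \<in> II \<Longrightarrow> hh t = cc"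
  unfolding cc_def
proof (rule const_int[OF _ _ t0I])
  fix s assume s: "s \<in> II"
  show "(hh has_real_derivative 0) (at s)" using dhh[OF s] E0tbox[OF s x0J] e1f_zero[OF s] by simp
qed

lemma Ebox: assumes t: "t \<in> II" and x: "x \<in> JJ" shows "E (t,x,u) = kk * u + cc"
  using Eaff[OF inD[OF t x], of u] E0box[OF t x] e1f_zero[OF t] hhconst[OF t] eebox[OF t x, of 0] eeconst[OF t]
  by simp

lemma Xbox: assumes t: "t \<in> II" and x: "x \<in> JJ" shows "X (t,x,u) = (T1f t + kk) * x + bf t"
proof -
  have "X (t,x,0) - (kk + T1f t) * x = X (t,x0,0) - (kk + T1f t) * x0"
  proof (rule const_int[where f = "\<lambda>r. X (t,r,0) - (kk + T1f t) * r", OF _ x x0J])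
    fix s assume s: "s \<in> JJ"
    show "((\<lambda>r. X (t,r,0) - (kk + T1f t) * r) has_real_derivative 0) (at s)"
      by (intro derivative_eq_intros DX3e[OF dX[OF inD[OF t s]]])
        (auto simp: Xxbox0[OF t s] eeconst[OF t])
  qed
  thus ?thesis using Xind[OF inD[OF t x], of u] unfolding bf_def by (simp add: algebra_simps)
qed

lemma dbf: assumes t: "t \<in> II" shows "(bf has_real_derivative b1f t) (at t)"
  unfolding bf_def b1f_def
  by (intro derivative_eq_intros DT3e[OF dX[OF inD0[OF t]]] dT1f[OF t]) (auto intro: dT1f[OF t])

lemma Xtbox: assumes t: "t \<in> II" and x: "x \<in> JJ" shows "d_t X (t,x,0) = T2f t * x + b1f t"
proof -
  have 1: "((\<lambda>s. X (s,x,0)) has_real_derivative d_t X (t,x,0)) (at t)"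
    by (rule DT3e[OF dX[OF inD[OF t x]]]) auto
  have 2: "((\<lambda>s. (T1f s + kk) * x + bf s) has_real_derivative T2f t * x + b1f t) (at t)"
    by (intro derivative_eq_intros dT1f[OF t] dbf[OF t]) (auto intro: dT1f[OF t] dbf[OF t])
  show ?thesis by (rule deriv_eq_open[OF 1 2 _ t]) (auto simp: Xbox[OF _ x])
qed

lemma Xxbox: assumes t: "t \<in> II" and x: "x \<in> JJ" shows "d_x X (t,x,0) = kk + T1f t"
  using Xxbox0[OF t x] eeconst[OF t] by simp

lemma Xxxbox: assumes t: "t \<in> II" and x: "x \<in> JJ" shows "d_x (d_x X) (t,x,0) = 0"
proof -
  have 1: "((\<lambda>r. d_x X (t,r,0)) has_real_derivative d_x (d_x X) (t,x,0)) (at x)"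
    by (rule DX3e[OF sdiff[OF smooth3(2)[OF smX] inD[OF t x]]]) auto
  have 2: "((\<lambda>r. kk + T1f t) has_real_derivative 0) (at x)" by simp
  show ?thesis by (rule deriv_eq_open[OF 1 2 _ x]) (auto simp: Xxbox[OF t])
qed

lemma RFbox: "RF A1 A2 t0 x0 \<delta> V Tf T1f T2f bf b1f kk cc"
  unfolding RF_def
proof (intro conjI ballI allI)
  fix t assume t: "t \<in> II"
  show "(Tf has_real_derivative T1f t) (at t)" by (rule dTf[OF t])
  show "(T1f has_real_derivative T2f t) (at t)" by (rule dT1f[OF t])
  show "(bf has_real_derivative b1f t) (at t)" by (rule dbf[OF t])
  fix x assume x: "x \<in> JJ"
  {
    fix u
    show "V (t,x,u) = (Tf t, (T1f t + kk) * x + bf t, kk * u + cc)"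
      using Tbox[OF t x, of u] Xbox[OF t x, of u] Ebox[OF t x, of u]
      unfolding tf_def xf_def ef_def by (simp add: prod_eq_iff)
  }
  show "T2f t * x + b1f t + Tf t * d_t2 A1 (t,x) + ((T1f t + kk) * x + bf t) * d_x2 A1 (t,x)
          - kk * A1 (t,x) - cc = 0"
    using G2[OF inD[OF t x]] Tbox[OF t x, of 0] Xbox[OF t x, of 0] Ebox[OF t x, of 0] Xxbox[OF t x]
      Ttbox[OF t x, of 0] Xtbox[OF t x] Xxxbox[OF t x] by (simp add: algebra_simps)
  show "(T1f t + 2 * kk) * A2 (t,x) - Tf t * d_t2 A2 (t,x) - ((T1f t + kk) * x + bf t) * d_x2 A2 (t,x) = 0"
    using F456(1)[OF inD[OF t x], of 0] Tbox[OF t x, of 0] Xbox[OF t x, of 0] Xxbox[OF t x]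
      Ttbox[OF t x, of 0] by (simp add: algebra_simps)
qed

end

lemma gron_scalar:
  fixes f f' :: "real \<Rightarrow> real"
  assumes "p \<le> s" "s \<le> q" and d: "\<And>r. r \<in> {p..q} \<Longrightarrow> (f has_real_derivative f' r) (at r)"
    and b: "\<And>r. r \<in> {p..q} \<Longrightarrow> \<bar>f' r\<bar> \<le> K * f r"
    and nn: "\<And>r. r \<in> {p..q} \<Longrightarrow> f r \<ge> 0" and z: "f s = 0"
  shows "\<And>r. r \<in> {p..q} \<Longrightarrow> f r = 0"
proof -
  fix r assume r: "r \<in> {p..q}"
  show "f r = 0"
  proof (cases "s \<le> r")
    case True
    let ?g = "\<lambda>r. f r * exp (- K * (r - s))"
    have "?g r \<le> ?g s"
    proof (rule DERIV_nonpos_imp_nonincreasing[OF True])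
      fix y assume y: "s \<le> y" "y \<le> r"
      hence yy: "y \<in> {p..q}" using r assms(1) by auto
      have "(?g has_real_derivative (f' y * exp (- K * (y - s)) + f y * (exp (- K * (y - s)) * (- K)))) (at y)"
        by (intro derivative_eq_intros d[OF yy]) (auto intro: d[OF yy])
      moreover have "f' y * exp (- K * (y - s)) + f y * (exp (- K * (y - s)) * (- K)) \<le> 0"
      proof -
        have "f' y - K * f y \<le> 0" using b[OF yy] by auto
        hence "(f' y - K * f y) * exp (- K * (y - s)) \<le> 0" by (simp add: mult_nonpos_nonneg)
        thus ?thesis by (simp add: algebra_simps)
      qed
      ultimately show "\<exists>D. (?g has_real_derivative D) (at y) \<and> D \<le> 0" by blast
    qed
    hence "f r * exp (- K * (r - s)) \<le> 0" using z by simp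
    hence "f r \<le> 0" by (simp add: mult_le_0_iff)
    thus ?thesis using nn[OF r] by simp
  next
    case False
    hence rs: "r \<le> s" by simp
    let ?g = "\<lambda>r. f r * exp (K * (r - s))"
    have "?g r \<le> ?g s"
    proof (rule DERIV_nonneg_imp_nondecreasing[OF rs])
      fix y assume y: "r \<le> y" "y \<le> s"
      hence yy: "y \<in> {p..q}" using r assms(2) by auto
      have "(?g has_real_derivative (f' y * exp (K * (y - s)) + f y * (exp (K * (y - s)) * K))) (at y)"
        by (intro derivative_eq_intros d[OF yy]) (auto intro: d[OF yy])
      moreover have "f' y * exp (K * (y - s)) + f y * (exp (K * (y - s)) * K) \<ge> 0"
      proof -
        have "f' y + K * f y \<ge> 0" using b[OF yy] by auto
        hence "(f' y + K * f y) * exp (K * (y - s)) \<ge> 0" by simp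
        thus ?thesis by (simp add: algebra_simps)
      qed
      ultimately show "\<exists>D. (?g has_real_derivative D) (at y) \<and> D \<ge> 0" by blast
    qed
    hence "f r * exp (K * (r - s)) \<le> 0" using z by simp
    hence "f r \<le> 0" by (simp add: mult_le_0_iff)
    thus ?thesis using nn[OF r] by simp
  qed
qed

lemma bound_cont:
  fixes g :: "real \<Rightarrow> real"
  assumes "continuous_on {p..q} g"
  shows "\<exists>L. \<forall>r\<in>{p..q}. \<bar>g r\<bar> \<le> L"
proof -
  have "compact (g ` {p..q})" by (rule compact_continuous_image[OF assms compact_Icc])
  hence "bounded (g ` {p..q})" by (rule compact_imp_bounded)
  then obtain L where "\<forall>y\<in>g ` {p..q}. norm y \<le> L" by (auto simp: bounded_iff)
  thus ?thesis by auto
qed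

lemma sq_ineq: "(\<bar>a\<bar> + \<bar>b\<bar> + \<bar>c::real\<bar>)^2 \<le> 3 * (a^2 + b^2 + c^2)"
proof -
  have "0 \<le> (\<bar>a\<bar> - \<bar>b\<bar>)^2 + (\<bar>b\<bar> - \<bar>c\<bar>)^2 + (\<bar>a\<bar> - \<bar>c\<bar>)^2" by simp
  thus ?thesis by (simp add: power2_eq_square algebra_simps)
qed

lemma row_bound:
  fixes m1 m2 m3 y1 y2 y3 L :: real
  assumes "\<bar>m1\<bar> \<le> L" "\<bar>m2\<bar> \<le> L" "\<bar>m3\<bar> \<le> L"
  shows "\<bar>m1 * y1 + m2 * y2 + m3 * y3\<bar> \<le> L * (\<bar>y1\<bar> + \<bar>y2\<bar> + \<bar>y3\<bar>)"
proof -
  have "\<bar>m1 * y1 + m2 * y2 + m3 * y3\<bar> \<le> \<bar>m1 * y1\<bar> + \<bar>m2 * y2\<bar> + \<bar>m3 * y3\<bar>" by linarith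
  also have "\<dots> = \<bar>m1\<bar> * \<bar>y1\<bar> + \<bar>m2\<bar> * \<bar>y2\<bar> + \<bar>m3\<bar> * \<bar>y3\<bar>" by (simp add: abs_mult)
  also have "\<dots> \<le> L * \<bar>y1\<bar> + L * \<bar>y2\<bar> + L * \<bar>y3\<bar>"
    by (intro add_mono mult_right_mono assms) auto
  finally show ?thesis by (simp add: algebra_simps)
qed

lemma quad_bound:
  fixes y1 y2 y3 R1 R2 R3 L :: real
  assumes "\<bar>R1\<bar> \<le> L * (\<bar>y1\<bar> + \<bar>y2\<bar> + \<bar>y3\<bar>)" "\<bar>R2\<bar> \<le> L * (\<bar>y1\<bar> + \<bar>y2\<bar> + \<bar>y3\<bar>)"
    "\<bar>R3\<bar> \<le> L * (\<bar>y1\<bar> + \<bar>y2\<bar> + \<bar>y3\<bar>)" "L \<ge> 0"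
  shows "\<bar>2 * y1 * R1 + 2 * y2 * R2 + 2 * y3 * R3\<bar> \<le> (6 * L) * (y1^2 + y2^2 + y3^2)"
proof -
  let ?S = "\<bar>y1\<bar> + \<bar>y2\<bar> + \<bar>y3\<bar>"
  have "\<bar>2 * y1 * R1 + 2 * y2 * R2 + 2 * y3 * R3\<bar> \<le> \<bar>2 * y1 * R1\<bar> + \<bar>2 * y2 * R2\<bar> + \<bar>2 * y3 * R3\<bar>"
    by linarith
  also have "\<dots> = 2 * \<bar>y1\<bar> * \<bar>R1\<bar> + 2 * \<bar>y2\<bar> * \<bar>R2\<bar> + 2 * \<bar>y3\<bar> * \<bar>R3\<bar>" by (simp add: abs_mult)
  also have "\<dots> \<le> 2 * \<bar>y1\<bar> * (L * ?S) + 2 * \<bar>y2\<bar> * (L * ?S) + 2 * \<bar>y3\<bar> * (L * ?S)"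
    by (intro add_mono mult_left_mono assms) auto
  also have "\<dots> = 2 * L * ?S^2" by (simp add: power2_eq_square algebra_simps)
  also have "\<dots> \<le> 2 * L * (3 * (y1^2 + y2^2 + y3^2))"
    using sq_ineq[of y1 y2 y3] assms(4) by (intro mult_left_mono) auto
  finally show ?thesis by (simp add: algebra_simps)
qed

lemma ode3_zero:
  fixes y1 y2 y3 :: "real \<Rightarrow> real" and m :: "nat \<Rightarrow> nat \<Rightarrow> real \<Rightarrow> real"
  assumes d1: "\<And>t. t \<in> {a<..<b} \<Longrightarrow> (y1 has_real_derivative (m 1 1 t * y1 t + m 1 2 t * y2 t + m 1 3 t * y3 t)) (at t)"
    and d2: "\<And>t. t \<in> {a<..<b} \<Longrightarrow> (y2 has_real_derivative (m 2 1 t * y1 t + m 2 2 t * y2 t + m 2 3 t * y3 t)) (at t)"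
    and d3: "\<And>t. t \<in> {a<..<b} \<Longrightarrow> (y3 has_real_derivative (m 3 1 t * y1 t + m 3 2 t * y2 t + m 3 3 t * y3 t)) (at t)"
    and c: "\<And>i j. continuous_on {a<..<b} (m i j)"
    and s: "s \<in> {a<..<b}" and z: "y1 s = 0" "y2 s = 0" "y3 s = 0"
    and t: "t \<in> {a<..<b}"
  shows "y1 t = 0 \<and> y2 t = 0 \<and> y3 t = 0"
proof -
  define p where "p = min s t"
  define q where "q = max s t"
  have sub: "{p..q} \<subseteq> {a<..<b}" using s t by (auto simp: p_def q_def)
  define M where "M = (\<lambda>r. \<bar>m 1 1 r\<bar> + \<bar>m 1 2 r\<bar> + \<bar>m 1 3 r\<bar> + \<bar>m 2 1 r\<bar> + \<bar>m 2 2 r\<bar> + \<bar>m 2 3 r\<bar>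
     + \<bar>m 3 1 r\<bar> + \<bar>m 3 2 r\<bar> + \<bar>m 3 3 r\<bar>)"
  have "continuous_on {p..q} M" unfolding M_def
    by (intro continuous_intros continuous_on_subset[OF c sub])
  then obtain L where L: "\<And>r. r \<in> {p..q} \<Longrightarrow> \<bar>M r\<bar> \<le> L" using bound_cont by blast
  have mb: "\<bar>m i j r\<bar> \<le> L" if "r \<in> {p..q}" "i \<in> {1,2,3}" "j \<in> {1,2,3}" for i j r
  proof -
    have nn: "\<And>i j. 0 \<le> \<bar>m i j r\<bar>" by simp
    have LL: "M r \<le> L" using L[OF that(1)] by simp
    have ij: "i = 1 \<or> i = 2 \<or> i = 3" "j = 1 \<or> j = 2 \<or> j = 3" using that(2,3) by auto
    have LL': "\<bar>m 1 1 r\<bar> + \<bar>m 1 2 r\<bar> + \<bar>m 1 3 r\<bar> + \<bar>m 2 1 r\<bar> + \<bar>m 2 2 r\<bar> + \<bar>m 2 3 r\<bar>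
     + \<bar>m 3 1 r\<bar> + \<bar>m 3 2 r\<bar> + \<bar>m 3 3 r\<bar> \<le> L" using LL unfolding M_def .
    show ?thesis using ij LL' nn[of 1 1] nn[of 1 2] nn[of 1 3] nn[of 2 1] nn[of 2 2] nn[of 2 3]
      nn[of 3 1] nn[of 3 2] nn[of 3 3] by (elim disjE; hypsubst; linarith)
  qed
  define f where "f = (\<lambda>r. (y1 r)^2 + (y2 r)^2 + (y3 r)^2)"
  define f' where "f' = (\<lambda>r. 2 * y1 r * (m 1 1 r * y1 r + m 1 2 r * y2 r + m 1 3 r * y3 r)
     + 2 * y2 r * (m 2 1 r * y1 r + m 2 2 r * y2 r + m 2 3 r * y3 r)
     + 2 * y3 r * (m 3 1 r * y1 r + m 3 2 r * y2 r + m 3 3 r * y3 r))"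
  have df: "(f has_real_derivative f' r) (at r)" if "r \<in> {p..q}" for r
  proof -
    have r: "r \<in> {a<..<b}" using sub that by auto
    show ?thesis unfolding f_def f'_def
      by (rule DERIV_cong[OF DERIV_add[OF DERIV_add[OF DERIV_power[OF d1[OF r]] DERIV_power[OF d2[OF r]]] DERIV_power[OF d3[OF r]]]])
        (simp add: algebra_simps)
  qed
  have bnd: "\<bar>f' r\<bar> \<le> (6 * L) * f r" if r: "r \<in> {p..q}" for r
  proof -
    have rb: "\<bar>m i 1 r * y1 r + m i 2 r * y2 r + m i 3 r * y3 r\<bar> \<le> L * (\<bar>y1 r\<bar> + \<bar>y2 r\<bar> + \<bar>y3 r\<bar>)"
      if "i \<in> {1,2,3}" for i
      by (rule row_bound) (use mb[OF r that] in auto)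
    have L0: "L \<ge> 0" using mb[OF r, of 1 1] by auto
    show ?thesis unfolding f_def f'_def
      by (rule quad_bound[OF rb rb rb L0]) auto
  qed
  have "f t = 0"
    by (rule gron_scalar[of p s q f f' "6 * L", OF _ _ df bnd])
       (auto simp: p_def q_def f_def z)
  thus ?thesis unfolding f_def by (simp add: add_nonneg_eq_0_iff)
qed

lemma ode3_zero':
  fixes ya yb yc ma mb mc md me mf mg mh mi :: "real \<Rightarrow> real"
  assumes d1: "\<And>t. t \<in> {a<..<b} \<Longrightarrow> (ya has_real_derivative (ma t * ya t + mb t * yb t + mc t * yc t)) (at t)"
    and d2: "\<And>t. t \<in> {a<..<b} \<Longrightarrow> (yb has_real_derivative (md t * ya t + me t * yb t + mf t * yc t)) (at t)"
    and d3: "\<And>t. t \<in> {a<..<b} \<Longrightarrow> (yc has_real_derivative (mg t * ya t + mh t * yb t + mi t * yc t)) (at t)"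
    and c: "continuous_on {a<..<b} ma" "continuous_on {a<..<b} mb" "continuous_on {a<..<b} mc"
      "continuous_on {a<..<b} md" "continuous_on {a<..<b} me" "continuous_on {a<..<b} mf"
      "continuous_on {a<..<b} mg" "continuous_on {a<..<b} mh" "continuous_on {a<..<b} mi"
    and s: "s \<in> {a<..<b}" and z: "ya s = 0" "yb s = 0" "yc s = 0"
    and t: "t \<in> {a<..<b}"
  shows "ya t = 0 \<and> yb t = 0 \<and> yc t = 0"
proof -
  define m where "m = (\<lambda>i j. if i = (1::nat) then (if j = (1::nat) then ma else if j = 2 then mb else if j = 3 then mc else (\<lambda>_. 0))
     else if i = 2 then (if j = 1 then md else if j = 2 then me else if j = 3 then mf else (\<lambda>_. 0))
     else if i = 3 then (if j = 1 then mg else if j = 2 then mh else if j = 3 then mi else (\<lambda>_. 0))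
     else (\<lambda>_. 0))"
  have cm: "continuous_on {a<..<b} (m i j)" for i j
    unfolding m_def using c by (auto intro: continuous_on_const)
  show ?thesis
    by (rule ode3_zero[of a b ya m yb yc s t]) (use d1 d2 d3 cm s z t in \<open>simp_all add: m_def\<close>)
qed

locale rfctx =
  fixes D :: "(real\<times>real) set" and A1 A2 :: "real\<times>real \<Rightarrow> real" and t0 x0 \<delta> :: real
  assumes oD: "open D" and dpos: "\<delta> > 0"
    and boxD: "\<And>t x. t \<in> {t0-\<delta><..<t0+\<delta>} \<Longrightarrow> x \<in> {x0-\<delta><..<x0+\<delta>} \<Longrightarrow> (t,x) \<in> D"
    and smA1: "smooth_on D A1" and A1xx: "\<forall>p\<in>D. d_x2 (d_x2 A1) p \<noteq> 0"
    and A2nz: "\<forall>p\<in>D. A2 p \<noteq> 0"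
begin

abbreviation "II \<equiv> {t0-\<delta><..<t0+\<delta>}"
abbreviation "JJ \<equiv> {x0-\<delta><..<x0+\<delta>}"
abbreviation "At \<equiv> d_t2 A1"
abbreviation "Ax \<equiv> d_x2 A1"
abbreviation "Atx \<equiv> d_x2 (d_t2 A1)"
abbreviation "G \<equiv> d_x2 (d_x2 A1)"
abbreviation "Atxx \<equiv> d_x2 (d_x2 (d_t2 A1))"
abbreviation "Gx \<equiv> d_x2 (d_x2 (d_x2 A1))"

lemma t0I: "t0 \<in> II" and x0J: "x0 \<in> JJ" using dpos by auto
lemma inD: "t \<in> II \<Longrightarrow> x \<in> JJ \<Longrightarrow> (t,x) \<in> D" using boxD by blast

lemma smA: "smooth_on D A1" "smooth_on D At" "smooth_on D Ax" "smooth_on D Atx" "smooth_on D G"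
  "smooth_on D Atxx" "smooth_on D Gx"
  using smA1 smooth2 by blast+

lemma dA: "(t,x) \<in> D \<Longrightarrow> A1 differentiable (at (t,x)) \<and> At differentiable (at (t,x)) \<and>
   Ax differentiable (at (t,x)) \<and> Atx differentiable (at (t,x)) \<and> G differentiable (at (t,x)) \<and>
   Atxx differentiable (at (t,x)) \<and> Gx differentiable (at (t,x))"
  using smooth_diff smA by blast

lemma cont_line: assumes "smooth_on D g" shows "continuous_on II (\<lambda>t. g (t,x0))"
proof (rule continuous_at_imp_continuous_on, rule ballI)
  fix t assume t: "t \<in> II"
  have "continuous (at (t,x0)) g"
    using smooth_diff[OF assms inD[OF t x0J]] differentiable_imp_continuous_within by blast
  moreover have "continuous (at t) (\<lambda>t. (t,x0))" by (intro continuous_intros)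
  ultimately show "isCont (\<lambda>t. g (t,x0)) t" using continuous_at_compose[of t "\<lambda>t. (t,x0)" g]
    by (simp add: o_def)
qed

lemma RF_E1x:
  assumes rf: "RF A1 A2 t0 x0 \<delta> W Tf T1f T2f bf b1f k c" and t: "t \<in> II" and x: "x \<in> JJ"
  shows "T2f t + Tf t * Atx (t,x) + T1f t * Ax (t,x) + ((T1f t + k) * x + bf t) * G (t,x) = 0"
proof -
  have E1: "\<And>r. r \<in> JJ \<Longrightarrow> T2f t * r + b1f t + Tf t * At (t,r) + ((T1f t + k) * r + bf t) * Ax (t,r)
          - k * A1 (t,r) - c = 0" using rf t unfolding RF_def by blast
  have 1: "((\<lambda>r. T2f t * r + b1f t + Tf t * At (t,r) + ((T1f t + k) * r + bf t) * Ax (t,r)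
          - k * A1 (t,r) - c) has_real_derivative
          (T2f t + Tf t * Atx (t,x) + T1f t * Ax (t,x) + ((T1f t + k) * x + bf t) * G (t,x))) (at x)"
  proof -
    have h: "((\<lambda>r. A1 (t,r)) has_real_derivative Ax (t,x)) (at x)"
      "((\<lambda>r. At (t,r)) has_real_derivative Atx (t,x)) (at x)"
      "((\<lambda>r. Ax (t,r)) has_real_derivative G (t,x)) (at x)"
      using dA[OF inD[OF t x]] by (auto intro!: DX2e)
    show ?thesis by (rule h derivative_eq_intros | simp add: algebra_simps)+
  qed
  have 2: "((\<lambda>r. 0) has_real_derivative 0) (at x)" by simp
  show ?thesis by (rule deriv_eq_open[OF 1 2 _ x]) (use E1 in auto)
qed

lemma RF_i:
  assumes rf: "RF A1 A2 t0 x0 \<delta> W Tf T1f T2f bf b1f k c" and t: "t \<in> II" and x: "x \<in> JJ"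
  shows "Tf t * Atxx (t,x) + (2 * T1f t + k) * G (t,x) + ((T1f t + k) * x + bf t) * Gx (t,x) = 0"
proof -
  have 1: "((\<lambda>r. T2f t + Tf t * Atx (t,r) + T1f t * Ax (t,r) + ((T1f t + k) * r + bf t) * G (t,r)) has_real_derivative
          (Tf t * Atxx (t,x) + (2 * T1f t + k) * G (t,x) + ((T1f t + k) * x + bf t) * Gx (t,x))) (at x)"
  proof -
    have h: "((\<lambda>r. Atx (t,r)) has_real_derivative Atxx (t,x)) (at x)"
      "((\<lambda>r. Ax (t,r)) has_real_derivative G (t,x)) (at x)"
      "((\<lambda>r. G (t,r)) has_real_derivative Gx (t,x)) (at x)"
      using dA[OF inD[OF t x]] by (auto intro!: DX2e)
    show ?thesis by (rule h derivative_eq_intros | simp add: algebra_simps)+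
  qed
  have 2: "((\<lambda>r. 0) has_real_derivative 0) (at x)" by simp
  show ?thesis by (rule deriv_eq_open[OF 1 2 _ x]) (use RF_E1x[OF rf t] in auto)
qed

lemma RF_dti:
  assumes rf: "RF A1 A2 t0 x0 \<delta> W Tf T1f T2f bf b1f k c" and t: "t \<in> II" and x: "x \<in> JJ"
  shows "T1f t * Atxx (t,x) + Tf t * d_t2 Atxx (t,x) + 2 * T2f t * G (t,x) + (2 * T1f t + k) * d_t2 G (t,x)
     + (T2f t * x + b1f t) * Gx (t,x) + ((T1f t + k) * x + bf t) * d_t2 Gx (t,x) = 0"
proof -
  have dd: "(Tf has_real_derivative T1f t) (at t)" "(T1f has_real_derivative T2f t) (at t)"
    "(bf has_real_derivative b1f t) (at t)" using rf t unfolding RF_def by auto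
  have 1: "((\<lambda>s. Tf s * Atxx (s,x) + (2 * T1f s + k) * G (s,x) + ((T1f s + k) * x + bf s) * Gx (s,x)) has_real_derivative
     (T1f t * Atxx (t,x) + Tf t * d_t2 Atxx (t,x) + 2 * T2f t * G (t,x) + (2 * T1f t + k) * d_t2 G (t,x)
     + (T2f t * x + b1f t) * Gx (t,x) + ((T1f t + k) * x + bf t) * d_t2 Gx (t,x))) (at t)"
  proof -
    have h: "((\<lambda>s. Atxx (s,x)) has_real_derivative d_t2 Atxx (t,x)) (at t)"
      "((\<lambda>s. G (s,x)) has_real_derivative d_t2 G (t,x)) (at t)"
      "((\<lambda>s. Gx (s,x)) has_real_derivative d_t2 Gx (t,x)) (at t)"
      using dA[OF inD[OF t x]] by (auto intro!: DT2e)
    show ?thesis by (rule h dd derivative_eq_intros | simp add: algebra_simps)+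
  qed
  have 2: "((\<lambda>s. 0) has_real_derivative 0) (at t)" by simp
  show ?thesis by (rule deriv_eq_open[OF 1 2 _ t]) (use RF_i[OF rf _ x] in auto)
qed

end

lemma RF_exists:
  assumes "open D" "\<forall>p\<in>D. A2 p \<noteq> 0" "lie_symmetry D A1 A2 V" "\<delta> > 0"
    "\<And>t x. t \<in> {t0-\<delta><..<t0+\<delta>} \<Longrightarrow> x \<in> {x0-\<delta><..<x0+\<delta>} \<Longrightarrow> (t,x) \<in> D"
    "smooth_on D A1" "\<forall>p\<in>D. d_x2 (d_x2 A1) p \<noteq> 0"
  shows "\<exists>Tf T1f T2f bf b1f k c. RF A1 A2 t0 x0 \<delta> V Tf T1f T2f bf b1f k c"
proof -
  interpret symbox D A1 A2 V t0 x0 \<delta>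
    by unfold_locales (use assms in auto)
  show ?thesis using RFbox by blast
qed

lemma RF_lin:
  assumes r1: "RF A1 A2 t0 x0 \<delta> W1 Ta1 Tb1 Tc1 ba1 bb1 k1 c1"
    and r2: "RF A1 A2 t0 x0 \<delta> W2 Ta2 Tb2 Tc2 ba2 bb2 k2 c2"
    and r3: "RF A1 A2 t0 x0 \<delta> W3 Ta3 Tb3 Tc3 ba3 bb3 k3 c3"
  shows "RF A1 A2 t0 x0 \<delta> (\<lambda>p. a1 *\<^sub>R W1 p + a2 *\<^sub>R W2 p + a3 *\<^sub>R W3 p)
     (\<lambda>t. a1 * Ta1 t + a2 * Ta2 t + a3 * Ta3 t) (\<lambda>t. a1 * Tb1 t + a2 * Tb2 t + a3 * Tb3 t)
     (\<lambda>t. a1 * Tc1 t + a2 * Tc2 t + a3 * Tc3 t) (\<lambda>t. a1 * ba1 t + a2 * ba2 t + a3 * ba3 t)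
     (\<lambda>t. a1 * bb1 t + a2 * bb2 t + a3 * bb3 t) (a1 * k1 + a2 * k2 + a3 * k3) (a1 * c1 + a2 * c2 + a3 * c3)"
  unfolding RF_def
proof (intro conjI ballI allI)
  fix t assume t: "t \<in> {t0-\<delta><..<t0+\<delta>}"
  have d: "(Ta1 has_real_derivative Tb1 t) (at t)" "(Tb1 has_real_derivative Tc1 t) (at t)" "(ba1 has_real_derivative bb1 t) (at t)"
    "(Ta2 has_real_derivative Tb2 t) (at t)" "(Tb2 has_real_derivative Tc2 t) (at t)" "(ba2 has_real_derivative bb2 t) (at t)"
    "(Ta3 has_real_derivative Tb3 t) (at t)" "(Tb3 has_real_derivative Tc3 t) (at t)" "(ba3 has_real_derivative bb3 t) (at t)"
    using r1 r2 r3 t unfolding RF_def by auto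
  show "((\<lambda>t. a1 * Ta1 t + a2 * Ta2 t + a3 * Ta3 t) has_real_derivative (a1 * Tb1 t + a2 * Tb2 t + a3 * Tb3 t)) (at t)"
    by (rule d derivative_eq_intros | simp)+
  show "((\<lambda>t. a1 * Tb1 t + a2 * Tb2 t + a3 * Tb3 t) has_real_derivative (a1 * Tc1 t + a2 * Tc2 t + a3 * Tc3 t)) (at t)"
    by (rule d derivative_eq_intros | simp)+
  show "((\<lambda>t. a1 * ba1 t + a2 * ba2 t + a3 * ba3 t) has_real_derivative (a1 * bb1 t + a2 * bb2 t + a3 * bb3 t)) (at t)"
    by (rule d derivative_eq_intros | simp)+
  fix x assume x: "x \<in> {x0-\<delta><..<x0+\<delta>}"
  {
    fix u
    have w: "W1 (t,x,u) = (Ta1 t, (Tb1 t + k1) * x + ba1 t, k1 * u + c1)"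
      "W2 (t,x,u) = (Ta2 t, (Tb2 t + k2) * x + ba2 t, k2 * u + c2)"
      "W3 (t,x,u) = (Ta3 t, (Tb3 t + k3) * x + ba3 t, k3 * u + c3)"
      using r1 r2 r3 t x unfolding RF_def by blast+
    show "a1 *\<^sub>R W1 (t,x,u) + a2 *\<^sub>R W2 (t,x,u) + a3 *\<^sub>R W3 (t,x,u) =
      (a1 * Ta1 t + a2 * Ta2 t + a3 * Ta3 t,
       ((a1 * Tb1 t + a2 * Tb2 t + a3 * Tb3 t) + (a1 * k1 + a2 * k2 + a3 * k3)) * x + (a1 * ba1 t + a2 * ba2 t + a3 * ba3 t),
       (a1 * k1 + a2 * k2 + a3 * k3) * u + (a1 * c1 + a2 * c2 + a3 * c3))"
      unfolding w by (simp add: algebra_simps)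
  }
  have e1: "Tc1 t * x + bb1 t + Ta1 t * d_t2 A1 (t,x) + ((Tb1 t + k1) * x + ba1 t) * d_x2 A1 (t,x) - k1 * A1 (t,x) - c1 = 0"
    "(Tb1 t + 2 * k1) * A2 (t,x) - Ta1 t * d_t2 A2 (t,x) - ((Tb1 t + k1) * x + ba1 t) * d_x2 A2 (t,x) = 0"
    using r1 t x unfolding RF_def by blast+
  have e2: "Tc2 t * x + bb2 t + Ta2 t * d_t2 A1 (t,x) + ((Tb2 t + k2) * x + ba2 t) * d_x2 A1 (t,x) - k2 * A1 (t,x) - c2 = 0"
    "(Tb2 t + 2 * k2) * A2 (t,x) - Ta2 t * d_t2 A2 (t,x) - ((Tb2 t + k2) * x + ba2 t) * d_x2 A2 (t,x) = 0"
    using r2 t x unfolding RF_def by blast+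
  have e3: "Tc3 t * x + bb3 t + Ta3 t * d_t2 A1 (t,x) + ((Tb3 t + k3) * x + ba3 t) * d_x2 A1 (t,x) - k3 * A1 (t,x) - c3 = 0"
    "(Tb3 t + 2 * k3) * A2 (t,x) - Ta3 t * d_t2 A2 (t,x) - ((Tb3 t + k3) * x + ba3 t) * d_x2 A2 (t,x) = 0"
    using r3 t x unfolding RF_def by blast+
  have "(a1 * Tc1 t + a2 * Tc2 t + a3 * Tc3 t) * x + (a1 * bb1 t + a2 * bb2 t + a3 * bb3 t) + (a1 * Ta1 t + a2 * Ta2 t + a3 * Ta3 t) * d_t2 A1 (t, x) +
    ((a1 * Tb1 t + a2 * Tb2 t + a3 * Tb3 t + (a1 * k1 + a2 * k2 + a3 * k3)) * x + (a1 * ba1 t + a2 * ba2 t + a3 * ba3 t)) * d_x2 A1 (t, x) -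
    (a1 * k1 + a2 * k2 + a3 * k3) * A1 (t, x) - (a1 * c1 + a2 * c2 + a3 * c3) =
    a1 * (Tc1 t * x + bb1 t + Ta1 t * d_t2 A1 (t,x) + ((Tb1 t + k1) * x + ba1 t) * d_x2 A1 (t,x) - k1 * A1 (t,x) - c1)
    + a2 * (Tc2 t * x + bb2 t + Ta2 t * d_t2 A1 (t,x) + ((Tb2 t + k2) * x + ba2 t) * d_x2 A1 (t,x) - k2 * A1 (t,x) - c2)
    + a3 * (Tc3 t * x + bb3 t + Ta3 t * d_t2 A1 (t,x) + ((Tb3 t + k3) * x + ba3 t) * d_x2 A1 (t,x) - k3 * A1 (t,x) - c3)"
    by (simp add: algebra_simps)
  thus "(a1 * Tc1 t + a2 * Tc2 t + a3 * Tc3 t) * x + (a1 * bb1 t + a2 * bb2 t + a3 * bb3 t) + (a1 * Ta1 t + a2 * Ta2 t + a3 * Ta3 t) * d_t2 A1 (t, x) +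
    ((a1 * Tb1 t + a2 * Tb2 t + a3 * Tb3 t + (a1 * k1 + a2 * k2 + a3 * k3)) * x + (a1 * ba1 t + a2 * ba2 t + a3 * ba3 t)) * d_x2 A1 (t, x) -
    (a1 * k1 + a2 * k2 + a3 * k3) * A1 (t, x) - (a1 * c1 + a2 * c2 + a3 * c3) = 0"
    using e1(1) e2(1) e3(1) by simp
  have "(a1 * Tb1 t + a2 * Tb2 t + a3 * Tb3 t + 2 * (a1 * k1 + a2 * k2 + a3 * k3)) * A2 (t, x) -
    (a1 * Ta1 t + a2 * Ta2 t + a3 * Ta3 t) * d_t2 A2 (t, x) -
    ((a1 * Tb1 t + a2 * Tb2 t + a3 * Tb3 t + (a1 * k1 + a2 * k2 + a3 * k3)) * x + (a1 * ba1 t + a2 * ba2 t + a3 * ba3 t)) * d_x2 A2 (t, x)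
    = a1 * ((Tb1 t + 2 * k1) * A2 (t,x) - Ta1 t * d_t2 A2 (t,x) - ((Tb1 t + k1) * x + ba1 t) * d_x2 A2 (t,x))
    + a2 * ((Tb2 t + 2 * k2) * A2 (t,x) - Ta2 t * d_t2 A2 (t,x) - ((Tb2 t + k2) * x + ba2 t) * d_x2 A2 (t,x))
    + a3 * ((Tb3 t + 2 * k3) * A2 (t,x) - Ta3 t * d_t2 A2 (t,x) - ((Tb3 t + k3) * x + ba3 t) * d_x2 A2 (t,x))"
    by (simp add: algebra_simps)
  thus "(a1 * Tb1 t + a2 * Tb2 t + a3 * Tb3 t + 2 * (a1 * k1 + a2 * k2 + a3 * k3)) * A2 (t, x) -
    (a1 * Ta1 t + a2 * Ta2 t + a3 * Ta3 t) * d_t2 A2 (t, x) -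
    ((a1 * Tb1 t + a2 * Tb2 t + a3 * Tb3 t + (a1 * k1 + a2 * k2 + a3 * k3)) * x + (a1 * ba1 t + a2 * ba2 t + a3 * ba3 t)) * d_x2 A2 (t, x) = 0"
    using e1(2) e2(2) e3(2) by simp
qed

context rfctx begin

lemma RF_UC:
  assumes rf: "RF A1 A2 t0 x0 \<delta> W Tf T1f T2f bf b1f 0 0" and s: "s \<in> II"
    and z: "Tf s = 0" "T1f s = 0" "bf s = 0" and t: "t \<in> II"
  shows "Tf t = 0 \<and> T1f t = 0 \<and> bf t = 0"
proof (rule ode3_zero'[where ya = Tf and yb = T1f and yc = bf and a = "t0-\<delta>" and b = "t0+\<delta>" and ma = "\<lambda>_. 0" and mb = "\<lambda>_. 1" and mc = "\<lambda>_. 0"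
    and md = "\<lambda>t. - Atx (t,x0)" and me = "\<lambda>t. - (Ax (t,x0) + x0 * G (t,x0))" and mf = "\<lambda>t. - G (t,x0)"
    and mg = "\<lambda>t. x0 * Atx (t,x0) - At (t,x0)" and mh = "\<lambda>t. x0^2 * G (t,x0)" and mi = "\<lambda>t. x0 * G (t,x0) - Ax (t,x0)",
    OF _ _ _ _ _ _ _ _ _ _ _ _ s z t])
  fix r assume r: "r \<in> II"
  have d: "(Tf has_real_derivative T1f r) (at r)" "(T1f has_real_derivative T2f r) (at r)"
    "(bf has_real_derivative b1f r) (at r)" using rf r unfolding RF_def by auto
  have ex: "T2f r + Tf r * Atx (r,x0) + T1f r * Ax (r,x0) + ((T1f r + 0) * x0 + bf r) * G (r,x0) = 0"
    using RF_E1x[OF rf r x0J] .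
  have e1: "T2f r * x0 + b1f r + Tf r * At (r,x0) + ((T1f r + 0) * x0 + bf r) * Ax (r,x0) - 0 * A1 (r,x0) - 0 = 0"
    using rf r x0J unfolding RF_def by blast
  show "(Tf has_real_derivative 0 * Tf r + 1 * T1f r + 0 * bf r) (at r)" using d(1) by simp
  show "(T1f has_real_derivative - Atx (r,x0) * Tf r + - (Ax (r,x0) + x0 * G (r,x0)) * T1f r + - G (r,x0) * bf r) (at r)"
    by (rule DERIV_cong[OF d(2)]) (use ex in \<open>simp add: algebra_simps\<close>)
  have "b1f r = (x0 * Atx (r,x0) - At (r,x0)) * Tf r + x0^2 * G (r,x0) * T1f r + (x0 * G (r,x0) - Ax (r,x0)) * bf r"
  proof -
    have t2: "T2f r = - (Tf r * Atx (r,x0) + T1f r * Ax (r,x0) + (T1f r * x0 + bf r) * G (r,x0))" using ex by simp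
    have b: "b1f r = - (T2f r * x0) - Tf r * At (r,x0) - (T1f r * x0 + bf r) * Ax (r,x0)"
      using e1 by (simp add: algebra_simps)
    show ?thesis unfolding b t2 by (simp add: algebra_simps power2_eq_square)
  qed
  thus "(bf has_real_derivative (x0 * Atx (r,x0) - At (r,x0)) * Tf r + x0^2 * G (r,x0) * T1f r + (x0 * G (r,x0) - Ax (r,x0)) * bf r) (at r)"
    using d(3) by simp
next
  show "continuous_on II (\<lambda>_. 0::real)" "continuous_on II (\<lambda>_. 1::real)" by (rule continuous_on_const)+
  show "continuous_on II (\<lambda>_. 0::real)" by (rule continuous_on_const)
  have c: "continuous_on II (\<lambda>t. Atx (t,x0))" "continuous_on II (\<lambda>t. Ax (t,x0))" "continuous_on II (\<lambda>t. G (t,x0))"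
    "continuous_on II (\<lambda>t. At (t,x0))" using cont_line smA by blast+
  show "continuous_on II (\<lambda>t. - Atx (t,x0))" "continuous_on II (\<lambda>t. - (Ax (t,x0) + x0 * G (t,x0)))"
    "continuous_on II (\<lambda>t. - G (t,x0))" "continuous_on II (\<lambda>t. x0 * Atx (t,x0) - At (t,x0))"
    "continuous_on II (\<lambda>t. x0^2 * G (t,x0))" "continuous_on II (\<lambda>t. x0 * G (t,x0) - Ax (t,x0))"
    using c by (auto intro!: continuous_intros)
qed

end

lemma box_in_open:
  fixes D :: "(real\<times>real) set"
  assumes "open D" "(t0,x0) \<in> D"
  shows "\<exists>\<delta>>0. \<forall>t x. t \<in> {t0-\<delta><..<t0+\<delta>} \<longrightarrow> x \<in> {x0-\<delta><..<x0+\<delta>} \<longrightarrow> (t,x) \<in> D"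
proof -
  obtain e where e: "e > 0" "ball (t0,x0) e \<subseteq> D" using assms open_contains_ball by blast
  show ?thesis
  proof (intro exI[of _ "e/2"] conjI allI impI)
    show "e/2 > 0" using e by simp
    fix t x assume t: "t \<in> {t0-e/2<..<t0+e/2}" and x: "x \<in> {x0-e/2<..<x0+e/2}"
    have "dist (t0,x0) (t,x) \<le> dist (t0,x0) (t0,x) + dist (t0,x) (t,x)" by (rule dist_triangle)
    also have "\<dots> = \<bar>x0 - x\<bar> + \<bar>t0 - t\<bar>" by (simp add: dist_Pair_Pair dist_real_def)
    also have "\<dots> < e" using t x by auto
    finally show "(t,x) \<in> D" using e by auto
  qed
qed

definition "boxs q e = {p. fst p \<in> {fst q - e<..<fst q + e} \<and> snd p \<in> {snd q - e<..<snd q + e}}"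

lemma ball_sub_box: "ball q e \<subseteq> boxs q e"
proof
  fix p assume "p \<in> ball q e"
  hence d: "dist q p < e" by simp
  have "dist (fst q) (fst p) < e" "dist (snd q) (snd p) < e"
    using d dist_fst_le[of q p] dist_snd_le[of q p] by linarith+
  thus "p \<in> boxs q e" by (auto simp: boxs_def dist_real_def)
qed

locale mctx =
  fixes D :: "(real\<times>real) set" and A1 A2 :: "real\<times>real \<Rightarrow> real"
    and V1 V2 V3 :: "real\<times>real\<times>real \<Rightarrow> real\<times>real\<times>real"
  assumes oD: "open D" and cD: "connected D" and smA1: "smooth_on D A1"
    and A2nz: "\<forall>p\<in>D. A2 p \<noteq> 0" and A1xx: "\<forall>p\<in>D. d_x2 (d_x2 A1) p \<noteq> 0"
    and l1: "lie_symmetry D A1 A2 V1" and l2: "lie_symmetry D A1 A2 V2" and l3: "lie_symmetry D A1 A2 V3"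
begin

definition "WW a1 a2 a3 = (\<lambda>p. a1 *\<^sub>R V1 p + a2 *\<^sub>R V2 p + a3 *\<^sub>R V3 p)"

lemma RF_W:
  assumes "\<delta> > 0" "\<And>t x. t \<in> {t0-\<delta><..<t0+\<delta>} \<Longrightarrow> x \<in> {x0-\<delta><..<x0+\<delta>} \<Longrightarrow> (t,x) \<in> D"
  shows "\<exists>Tf T1f T2f bf b1f k c. RF A1 A2 t0 x0 \<delta> (WW a1 a2 a3) Tf T1f T2f bf b1f k c"
proof -
  obtain Ta1 Tb1 Tc1 ba1 bb1 k1 c1 where r1: "RF A1 A2 t0 x0 \<delta> V1 Ta1 Tb1 Tc1 ba1 bb1 k1 c1"
    using RF_exists[OF oD A2nz l1 assms smA1 A1xx] by blast
  obtain Ta2 Tb2 Tc2 ba2 bb2 k2 c2 where r2: "RF A1 A2 t0 x0 \<delta> V2 Ta2 Tb2 Tc2 ba2 bb2 k2 c2"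
    using RF_exists[OF oD A2nz l2 assms smA1 A1xx] by blast
  obtain Ta3 Tb3 Tc3 ba3 bb3 k3 c3 where r3: "RF A1 A2 t0 x0 \<delta> V3 Ta3 Tb3 Tc3 ba3 bb3 k3 c3"
    using RF_exists[OF oD A2nz l3 assms smA1 A1xx] by blast
  show ?thesis using RF_lin[OF r1 r2 r3, of a1 a2 a3] unfolding WW_def by blast
qed

definition "ZZ a1 a2 a3 = {q \<in> D. \<exists>e>0. boxs q e \<subseteq> D \<and> (\<forall>t x u. (t,x) \<in> boxs q e \<longrightarrow> WW a1 a2 a3 (t,x,u) = 0)}"

lemma keyK:
  assumes q: "q \<in> D" and e: "e > 0" "boxs q e \<subseteq> D" and q': "q' \<in> boxs q e \<inter> ZZ a1 a2 a3"
  shows "q \<in> ZZ a1 a2 a3"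
proof -
  obtain t0 x0 where qq: "q = (t0,x0)" by (cases q) auto
  obtain t1 x1 where qq': "q' = (t1,x1)" by (cases q') auto
  have bD: "\<And>t x. t \<in> {t0-e<..<t0+e} \<Longrightarrow> x \<in> {x0-e<..<x0+e} \<Longrightarrow> (t,x) \<in> D"
    using e(2) by (auto simp: boxs_def qq)
  interpret rfctx D A1 A2 t0 x0 e by unfold_locales (use oD e bD smA1 A1xx A2nz in auto)
  obtain Tf T1f T2f bf b1f k c where rf: "RF A1 A2 t0 x0 e (WW a1 a2 a3) Tf T1f T2f bf b1f k c"
    using RF_W[OF e(1) bD] by blast
  have t1: "t1 \<in> II" and x1: "x1 \<in> JJ" using q' by (auto simp: boxs_def qq qq')
  obtain e' where e': "e' > 0" "\<forall>t x u. (t,x) \<in> boxs q' e' \<longrightarrow> WW a1 a2 a3 (t,x,u) = 0"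
    using q' unfolding ZZ_def by blast
  have Wrf: "\<And>t x u. t \<in> II \<Longrightarrow> x \<in> JJ \<Longrightarrow> WW a1 a2 a3 (t,x,u) = (Tf t, (T1f t + k) * x + bf t, k * u + c)"
    using rf unfolding RF_def by blast
  have Tz: "Tf s = 0" if "s \<in> II \<inter> {t1-e'<..<t1+e'}" for s
  proof -
    have "WW a1 a2 a3 (s,x1,0) = 0" using e'(2) that by (auto simp: boxs_def qq')
    thus ?thesis using Wrf[of s x1 0] that x1 by (simp add: zero_prod_def)
  qed
  have dT: "(Tf has_real_derivative T1f t1) (at t1)" using rf t1 unfolding RF_def by blast
  have T1z: "T1f t1 = 0"
    by (rule deriv_eq_open[OF dT DERIV_const[of 0 "at t1"], of "II \<inter> {t1-e'<..<t1+e'}"])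
       (use t1 e' Tz in auto)
  have W1: "\<And>u. WW a1 a2 a3 (t1,x1,u) = 0"
  proof -
    fix u
    have "(t1,x1) \<in> boxs q' e'" using e'(1) by (auto simp: boxs_def qq')
    thus "WW a1 a2 a3 (t1,x1,u) = 0" using e'(2) by blast
  qed
  have kc: "k * u + c = 0" for u using W1[of u] Wrf[OF t1 x1, of u] by (simp add: zero_prod_def)
  have c0: "c = 0" using kc[of 0] by simp
  have k0: "k = 0" using kc[of 1] c0 by simp
  have b0: "bf t1 = 0" using W1[of 0] Wrf[OF t1 x1, of 0] T1z k0 by (simp add: zero_prod_def)
  have T0: "Tf t1 = 0" using Tz[of t1] t1 e' by simp
  have rf0: "RF A1 A2 t0 x0 e (WW a1 a2 a3) Tf T1f T2f bf b1f 0 0" using rf k0 c0 by simp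
  have all0: "\<And>t. t \<in> II \<Longrightarrow> Tf t = 0 \<and> T1f t = 0 \<and> bf t = 0"
    using RF_UC[OF rf0 t1 T0 T1z b0] by blast
  have "\<forall>t x u. (t,x) \<in> boxs q e \<longrightarrow> WW a1 a2 a3 (t,x,u) = 0"
  proof (intro allI impI)
    fix t x u assume "(t,x) \<in> boxs q e"
    hence tx: "t \<in> II" "x \<in> JJ" by (auto simp: boxs_def qq)
    show "WW a1 a2 a3 (t,x,u) = 0" using Wrf[OF tx, of u] all0[OF tx(1)] k0 c0 by (simp add: zero_prod_def)
  qed
  thus ?thesis unfolding ZZ_def using q e by blast
qed

lemma UCG:
  assumes q0: "q0 \<in> ZZ a1 a2 a3"
  shows "\<forall>p\<in>Omega D. WW a1 a2 a3 p = 0"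
proof -
  let ?Z = "ZZ a1 a2 a3"
  have oZ: "open ?Z"
    unfolding open_contains_ball
  proof
    fix q assume q: "q \<in> ?Z"
    then obtain e where e: "e > 0" "boxs q e \<subseteq> D" "\<forall>t x u. (t,x) \<in> boxs q e \<longrightarrow> WW a1 a2 a3 (t,x,u) = 0"
      unfolding ZZ_def by blast
    have "ball q (e/2) \<subseteq> ?Z"
    proof
      fix q'' assume q'': "q'' \<in> ball q (e/2)"
      have sub: "boxs q'' (e/2) \<subseteq> boxs q e"
      proof
        fix p assume p: "p \<in> boxs q'' (e/2)"
        have "q'' \<in> boxs q (e/2)" using q'' ball_sub_box by blast
        thus "p \<in> boxs q e" using p by (auto simp: boxs_def)
      qed
      have "q'' \<in> boxs q (e/2)" using q'' ball_sub_box by blast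
      hence "q'' \<in> boxs q e" by (auto simp: boxs_def)
      hence "q'' \<in> D" using e(2) by blast
      thus "q'' \<in> ?Z" unfolding ZZ_def using sub e by (intro CollectI conjI exI[of _ "e/2"]) auto
    qed
    thus "\<exists>e>0. ball q e \<subseteq> ?Z" using e(1) by (intro exI[of _ "e/2"]) auto
  qed
  have oY: "open (D - ?Z)"
    unfolding open_contains_ball
  proof
    fix q assume q: "q \<in> D - ?Z"
    obtain t0 x0 where qq: "q = (t0,x0)" by (cases q) auto
    obtain e where e: "e > 0" "\<forall>t x. t \<in> {t0-e<..<t0+e} \<longrightarrow> x \<in> {x0-e<..<x0+e} \<longrightarrow> (t,x) \<in> D"
      using box_in_open[OF oD, of t0 x0] q qq by blast
    have bsub: "boxs q e \<subseteq> D" using e(2) by (auto simp: boxs_def qq)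
    have "ball q e \<subseteq> D - ?Z"
    proof
      fix q'' assume q'': "q'' \<in> ball q e"
      hence qb: "q'' \<in> boxs q e" using ball_sub_box by blast
      show "q'' \<in> D - ?Z"
      proof
        show "q'' \<in> D" using qb bsub by blast
        show "q'' \<notin> ?Z"
        proof
          assume "q'' \<in> ?Z"
          hence "q \<in> ?Z" using keyK[of q e q''] q e(1) bsub qb by blast
          thus False using q by blast
        qed
      qed
    qed
    thus "\<exists>e>0. ball q e \<subseteq> D - ?Z" using e(1) by blast
  qed
  have ZD: "?Z \<subseteq> D" unfolding ZZ_def by blast
  have "?Z \<inter> D = {} \<or> (D - ?Z) \<inter> D = {}"
    by (rule connectedD[OF cD oZ oY]) auto
  hence DZ: "D \<subseteq> ?Z" using q0 ZD by blast
  show ?thesis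
  proof
    fix p assume p: "p \<in> Omega D"
    obtain t x u where pp: "p = (t,x,u)" by (cases p) auto
    have "(t,x) \<in> ?Z" using p pp DZ by auto
    then obtain e where e: "e > 0" "\<forall>t' x' u. (t',x') \<in> boxs (t,x) e \<longrightarrow> WW a1 a2 a3 (t',x',u) = 0"
      unfolding ZZ_def by blast
    have "(t,x) \<in> boxs (t,x) e" using e(1) by (auto simp: boxs_def)
    thus "WW a1 a2 a3 p = 0" using e(2) pp by blast
  qed
qed

end

lemma linalg:
  fixes a1 a2 a3 b1 b2 b3 :: real
  shows "\<exists>c1 c2 c3. (c1,c2,c3) \<noteq> (0,0,0) \<and> c1*a1 + c2*a2 + c3*a3 = 0 \<and> c1*b1 + c2*b2 + c3*b3 = 0"
proof (cases "(a2*b3 - a3*b2, a3*b1 - a1*b3, a1*b2 - a2*b1) \<noteq> (0,0,0)")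
  case True
  show ?thesis
    by (rule exI[of _ "a2*b3 - a3*b2"], rule exI[of _ "a3*b1 - a1*b3"], rule exI[of _ "a1*b2 - a2*b1"])
       (use True in \<open>simp add: algebra_simps\<close>)
next
  case False
  hence cr: "a2*b3 = a3*b2" "a3*b1 = a1*b3" "a1*b2 = a2*b1" by auto
  show ?thesis
  proof (cases "a1 \<noteq> 0 \<or> a2 \<noteq> 0")
    case True
    show ?thesis
      by (rule exI[of _ a2], rule exI[of _ "-a1"], rule exI[of _ 0]) (use True cr in \<open>auto simp: algebra_simps\<close>)
  next
    case F2: False
    show ?thesis
    proof (cases "a3 \<noteq> 0")
      case True
      have "b1 = 0" "b2 = 0" using cr F2 True by auto
      thus ?thesis using F2 by (intro exI[of _ 1] exI[of _ 0]) auto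
    next
      case F3: False
      show ?thesis
      proof (cases "b1 \<noteq> 0 \<or> b2 \<noteq> 0")
        case True
        show ?thesis
          by (rule exI[of _ b2], rule exI[of _ "-b1"], rule exI[of _ 0]) (use True F2 F3 in \<open>auto simp: algebra_simps\<close>)
      next
        case False
        thus ?thesis using F2 F3 by (intro exI[of _ 1] exI[of _ 0]) auto
      qed
    qed
  qed
qed

context mctx begin

lemma main: "\<exists>c1 c2 c3 :: real. (c1, c2, c3) \<noteq> (0, 0, 0) \<and>
              (\<forall>p \<in> Omega D. c1 *\<^sub>R V1 p + c2 *\<^sub>R V2 p + c3 *\<^sub>R V3 p = 0)"
proof (cases "D = {}")
  case True
  show ?thesis by (rule exI[of _ 1], rule exI[of _ 0], rule exI[of _ 0]) (auto simp: Omega_def True)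
next
  case False
  then obtain t0 x0 where p0: "(t0,x0) \<in> D" by auto
  obtain \<delta> where d: "\<delta> > 0" "\<forall>t x. t \<in> {t0-\<delta><..<t0+\<delta>} \<longrightarrow> x \<in> {x0-\<delta><..<x0+\<delta>} \<longrightarrow> (t,x) \<in> D"
    using box_in_open[OF oD p0] by blast
  have bD: "\<And>t x. t \<in> {t0-\<delta><..<t0+\<delta>} \<Longrightarrow> x \<in> {x0-\<delta><..<x0+\<delta>} \<Longrightarrow> (t,x) \<in> D" using d by blast
  interpret rfctx D A1 A2 t0 x0 \<delta> by unfold_locales (use oD d(1) bD smA1 A1xx A2nz in auto)
  obtain Ta1 Tb1 Tc1 ba1 bb1 k1 c1 where r1: "RF A1 A2 t0 x0 \<delta> V1 Ta1 Tb1 Tc1 ba1 bb1 k1 c1"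
    using RF_exists[OF oD A2nz l1 d(1) bD smA1 A1xx] by blast
  obtain Ta2 Tb2 Tc2 ba2 bb2 k2 c2 where r2: "RF A1 A2 t0 x0 \<delta> V2 Ta2 Tb2 Tc2 ba2 bb2 k2 c2"
    using RF_exists[OF oD A2nz l2 d(1) bD smA1 A1xx] by blast
  obtain Ta3 Tb3 Tc3 ba3 bb3 k3 c3 where r3: "RF A1 A2 t0 x0 \<delta> V3 Ta3 Tb3 Tc3 ba3 bb3 k3 c3"
    using RF_exists[OF oD A2nz l3 d(1) bD smA1 A1xx] by blast
  define TW where "TW = (\<lambda>a1 a2 a3 t. a1 * Ta1 t + a2 * Ta2 t + a3 * Ta3 t)"
  define T1W where "T1W = (\<lambda>a1 a2 a3 t. a1 * Tb1 t + a2 * Tb2 t + a3 * Tb3 t)"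
  define T2W where "T2W = (\<lambda>a1 a2 a3 t. a1 * Tc1 t + a2 * Tc2 t + a3 * Tc3 t)"
  define bW where "bW = (\<lambda>a1 a2 a3 t. a1 * ba1 t + a2 * ba2 t + a3 * ba3 t)"
  define b1W where "b1W = (\<lambda>a1 a2 a3 t. a1 * bb1 t + a2 * bb2 t + a3 * bb3 t)"
  define kW where "kW = (\<lambda>a1 a2 a3. a1 * k1 + a2 * k2 + a3 * k3)"
  define cW where "cW = (\<lambda>a1 a2 a3. a1 * c1 + a2 * c2 + a3 * c3)"
  have rW: "RF A1 A2 t0 x0 \<delta> (WW a1 a2 a3) (TW a1 a2 a3) (T1W a1 a2 a3) (T2W a1 a2 a3) (bW a1 a2 a3)
      (b1W a1 a2 a3) (kW a1 a2 a3) (cW a1 a2 a3)" for a1 a2 a3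
    using RF_lin[OF r1 r2 r3, of a1 a2 a3]
    unfolding WW_def TW_def T1W_def T2W_def bW_def b1W_def kW_def cW_def .
  show ?thesis
  proof (rule ccontr)
    assume H: "\<not> ?thesis"
    have Kc: False if a: "(a1,a2,a3) \<noteq> (0,0,0)" and s: "s \<in> II" and z: "TW a1 a2 a3 s = 0"
      "T1W a1 a2 a3 s = 0" "bW a1 a2 a3 s = 0" "kW a1 a2 a3 = 0" "cW a1 a2 a3 = 0" for a1 a2 a3 s
    proof -
      have rf0: "RF A1 A2 t0 x0 \<delta> (WW a1 a2 a3) (TW a1 a2 a3) (T1W a1 a2 a3) (T2W a1 a2 a3) (bW a1 a2 a3)
        (b1W a1 a2 a3) 0 0" using rW[of a1 a2 a3] z(4,5) by simp
      have all0: "\<And>t. t \<in> II \<Longrightarrow> TW a1 a2 a3 t = 0 \<and> T1W a1 a2 a3 t = 0 \<and> bW a1 a2 a3 t = 0"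
        using RF_UC[OF rf0 s z(1-3)] by blast
      have Wrf: "\<And>t x u. t \<in> II \<Longrightarrow> x \<in> JJ \<Longrightarrow> WW a1 a2 a3 (t,x,u) =
          (TW a1 a2 a3 t, (T1W a1 a2 a3 t + 0) * x + bW a1 a2 a3 t, 0 * u + 0)"
        using rf0 unfolding RF_def by blast
      have "(t0,x0) \<in> ZZ a1 a2 a3"
        unfolding ZZ_def
      proof (intro CollectI conjI exI[of _ \<delta>])
        show "(t0,x0) \<in> D" by (rule p0)
        show "\<delta> > 0" by (rule d(1))
        show "boxs (t0,x0) \<delta> \<subseteq> D" using bD by (auto simp: boxs_def)
        show "\<forall>t x u. (t,x) \<in> boxs (t0,x0) \<delta> \<longrightarrow> WW a1 a2 a3 (t,x,u) = 0"
        proof (intro allI impI)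
          fix t x u assume "(t,x) \<in> boxs (t0,x0) \<delta>"
          hence tx: "t \<in> II" "x \<in> JJ" by (auto simp: boxs_def)
          show "WW a1 a2 a3 (t,x,u) = 0" using Wrf[OF tx, of u] all0[OF tx(1)] by (simp add: zero_prod_def)
        qed
      qed
      hence "\<forall>p\<in>Omega D. WW a1 a2 a3 p = 0" by (rule UCG)
      thus False using H a unfolding WW_def by blast
    qed
    have step: "\<exists>a1 a2 a3. (a1,a2,a3) \<noteq> (0,0,0) \<and> TW a1 a2 a3 t = 0 \<and> T1W a1 a2 a3 t = 0 \<and>
        bW a1 a2 a3 t = 0 \<and> kW a1 a2 a3 = 0 \<and> cW a1 a2 a3 \<noteq> 0" if t: "t \<in> II" and x: "x \<in> JJ" for t x
    proof -
      obtain a1 a2 a3 where a: "(a1,a2,a3) \<noteq> (0,0,0)"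
        "a1 * Ta1 t + a2 * Ta2 t + a3 * Ta3 t = 0"
        "a1 * ((Tb1 t + k1) * x + ba1 t) + a2 * ((Tb2 t + k2) * x + ba2 t) + a3 * ((Tb3 t + k3) * x + ba3 t) = 0"
        using linalg[of "Ta1 t" "Ta2 t" "Ta3 t" "(Tb1 t + k1) * x + ba1 t" "(Tb2 t + k2) * x + ba2 t"
          "(Tb3 t + k3) * x + ba3 t"] by blast
      have T0: "TW a1 a2 a3 t = 0" using a(2) unfolding TW_def by simp
      have X0: "(T1W a1 a2 a3 t + kW a1 a2 a3) * x + bW a1 a2 a3 t = 0"
        using a(3) unfolding T1W_def kW_def bW_def by (simp add: algebra_simps)
      have i: "TW a1 a2 a3 t * Atxx (t,x) + (2 * T1W a1 a2 a3 t + kW a1 a2 a3) * G (t,x)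
          + ((T1W a1 a2 a3 t + kW a1 a2 a3) * x + bW a1 a2 a3 t) * Gx (t,x) = 0"
        by (rule RF_i[OF rW t x])
      have e2: "(T1W a1 a2 a3 t + 2 * kW a1 a2 a3) * A2 (t,x) - TW a1 a2 a3 t * d_t2 A2 (t,x)
          - ((T1W a1 a2 a3 t + kW a1 a2 a3) * x + bW a1 a2 a3 t) * d_x2 A2 (t,x) = 0"
        using rW[of a1 a2 a3] t x unfolding RF_def by blast
      have Gn: "G (t,x) \<noteq> 0" using A1xx inD[OF t x] by blast
      have An: "A2 (t,x) \<noteq> 0" using A2nz inD[OF t x] by blast
      have h1: "2 * T1W a1 a2 a3 t + kW a1 a2 a3 = 0" using i T0 X0 Gn by simp
      have h2: "T1W a1 a2 a3 t + 2 * kW a1 a2 a3 = 0" using e2 T0 X0 An by simp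
      have T10: "T1W a1 a2 a3 t = 0" and k0: "kW a1 a2 a3 = 0" using h1 h2 by linarith+
      have b0: "bW a1 a2 a3 t = 0" using X0 T10 k0 by simp
      have "cW a1 a2 a3 \<noteq> 0"
      proof
        assume "cW a1 a2 a3 = 0"
        thus False using Kc[OF a(1) t T0 T10 b0 k0] by blast
      qed
      thus ?thesis using a(1) T0 T10 b0 k0 by blast
    qed
    have Gx0: "Gx (t,x) = 0" if t: "t \<in> II" and x: "x \<in> JJ" for t x
    proof -
      obtain a1 a2 a3 where a: "(a1,a2,a3) \<noteq> (0,0,0)" "TW a1 a2 a3 t = 0" "T1W a1 a2 a3 t = 0"
        "bW a1 a2 a3 t = 0" "kW a1 a2 a3 = 0" "cW a1 a2 a3 \<noteq> 0" using step[OF t x] by blast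
      have ex: "T2W a1 a2 a3 t + TW a1 a2 a3 t * Atx (t,x) + T1W a1 a2 a3 t * Ax (t,x)
          + ((T1W a1 a2 a3 t + kW a1 a2 a3) * x + bW a1 a2 a3 t) * G (t,x) = 0"
        by (rule RF_E1x[OF rW t x])
      hence T20: "T2W a1 a2 a3 t = 0" using a by simp
      have e1: "T2W a1 a2 a3 t * x + b1W a1 a2 a3 t + TW a1 a2 a3 t * d_t2 A1 (t,x)
          + ((T1W a1 a2 a3 t + kW a1 a2 a3) * x + bW a1 a2 a3 t) * d_x2 A1 (t,x)
          - kW a1 a2 a3 * A1 (t,x) - cW a1 a2 a3 = 0"
        using rW[of a1 a2 a3] t x unfolding RF_def by blast
      hence b1c: "b1W a1 a2 a3 t = cW a1 a2 a3" using a T20 by simp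
      have dti: "T1W a1 a2 a3 t * Atxx (t,x) + TW a1 a2 a3 t * d_t2 Atxx (t,x) + 2 * T2W a1 a2 a3 t * G (t,x)
          + (2 * T1W a1 a2 a3 t + kW a1 a2 a3) * d_t2 G (t,x)
          + (T2W a1 a2 a3 t * x + b1W a1 a2 a3 t) * Gx (t,x)
          + ((T1W a1 a2 a3 t + kW a1 a2 a3) * x + bW a1 a2 a3 t) * d_t2 Gx (t,x) = 0"
        by (rule RF_dti[OF rW t x])
      hence "cW a1 a2 a3 * Gx (t,x) = 0" using a T20 b1c by simp
      thus ?thesis using a(6) by simp
    qed
    obtain a1 a2 a3 where a: "(a1,a2,a3) \<noteq> (0,0,0)" "TW a1 a2 a3 t0 = 0" "T1W a1 a2 a3 t0 = 0"
      "bW a1 a2 a3 t0 = 0" "kW a1 a2 a3 = 0" "cW a1 a2 a3 \<noteq> 0" using step[OF t0I x0J] by blast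
    have rfa: "RF A1 A2 t0 x0 \<delta> (WW a1 a2 a3) (TW a1 a2 a3) (T1W a1 a2 a3) (T2W a1 a2 a3) (bW a1 a2 a3)
        (b1W a1 a2 a3) 0 (cW a1 a2 a3)" using rW[of a1 a2 a3] a(5) by simp
    have dT: "\<And>t. t \<in> II \<Longrightarrow> (TW a1 a2 a3 has_real_derivative T1W a1 a2 a3 t) (at t)"
      "\<And>t. t \<in> II \<Longrightarrow> (T1W a1 a2 a3 has_real_derivative T2W a1 a2 a3 t) (at t)"
      "\<And>t. t \<in> II \<Longrightarrow> (bW a1 a2 a3 has_real_derivative b1W a1 a2 a3 t) (at t)"
      using rfa unfolding RF_def by auto
    have T1rel: "T1W a1 a2 a3 t = (- Atxx (t,x0) / (2 * G (t,x0))) * TW a1 a2 a3 t" if t: "t \<in> II" for t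
    proof -
      have i: "TW a1 a2 a3 t * Atxx (t,x0) + (2 * T1W a1 a2 a3 t + 0) * G (t,x0)
          + ((T1W a1 a2 a3 t + 0) * x0 + bW a1 a2 a3 t) * Gx (t,x0) = 0"
        by (rule RF_i[OF rfa t x0J])
      have Gn: "G (t,x0) \<noteq> 0" using A1xx inD[OF t x0J] by blast
      have "TW a1 a2 a3 t * Atxx (t,x0) + 2 * T1W a1 a2 a3 t * G (t,x0) = 0" using i Gx0[OF t x0J] by simp
      thus ?thesis using Gn by (simp add: field_simps)
    qed
    have TWz: "TW a1 a2 a3 t = 0" if t: "t \<in> II" for t
    proof -
      have "TW a1 a2 a3 t = 0 \<and> (\<lambda>_. 0::real) t = 0 \<and> (\<lambda>_. 0::real) t = 0"
      proof (rule ode3_zero'[where ya = "TW a1 a2 a3" and yb = "\<lambda>_. 0" and yc = "\<lambda>_. 0"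
          and a = "t0-\<delta>" and b = "t0+\<delta>" and ma = "\<lambda>t. - Atxx (t,x0) / (2 * G (t,x0))"
          and mb = "\<lambda>_. 0" and mc = "\<lambda>_. 0" and md = "\<lambda>_. 0" and me = "\<lambda>_. 0" and mf = "\<lambda>_. 0"
          and mg = "\<lambda>_. 0" and mh = "\<lambda>_. 0" and mi = "\<lambda>_. 0", OF _ _ _ _ _ _ _ _ _ _ _ _ t0I a(2) _ _ t])
        fix r assume r: "r \<in> II"
        show "(TW a1 a2 a3 has_real_derivative - Atxx (r,x0) / (2 * G (r,x0)) * TW a1 a2 a3 r + 0 * 0 + 0 * 0) (at r)"
          using dT(1)[OF r] T1rel[OF r] by simp
      next
        have c1: "continuous_on II (\<lambda>t. Atxx (t,x0))" "continuous_on II (\<lambda>t. G (t,x0))"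
          using cont_line smA by blast+
        have "\<forall>t\<in>II. 2 * G (t,x0) \<noteq> 0" using A1xx inD x0J by auto
        thus "continuous_on II (\<lambda>t. - Atxx (t,x0) / (2 * G (t,x0)))"
          using c1 by (auto intro!: continuous_intros)
      qed auto
      thus ?thesis by simp
    qed
    have T1z: "T1W a1 a2 a3 t = 0" if t: "t \<in> II" for t using T1rel[OF t] TWz[OF t] by simp
    have T2z: "T2W a1 a2 a3 t = 0" if t: "t \<in> II" for t
      by (rule deriv_eq_open[OF dT(2)[OF t] DERIV_const[of 0 "at t"], of II]) (use t T1z in auto)
    have bz: "bW a1 a2 a3 t = 0" if t: "t \<in> II" for t
    proof -
      have ex: "T2W a1 a2 a3 t + TW a1 a2 a3 t * Atx (t,x0) + T1W a1 a2 a3 t * Ax (t,x0)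
          + ((T1W a1 a2 a3 t + 0) * x0 + bW a1 a2 a3 t) * G (t,x0) = 0"
        by (rule RF_E1x[OF rfa t x0J])
      have Gn: "G (t,x0) \<noteq> 0" using A1xx inD[OF t x0J] by blast
      show ?thesis using ex T2z[OF t] TWz[OF t] T1z[OF t] Gn by simp
    qed
    have b1z: "b1W a1 a2 a3 t0 = 0"
      by (rule deriv_eq_open[OF dT(3)[OF t0I] DERIV_const[of 0 "at t0"], of II]) (use t0I bz in auto)
    have e1: "T2W a1 a2 a3 t0 * x0 + b1W a1 a2 a3 t0 + TW a1 a2 a3 t0 * d_t2 A1 (t0,x0)
          + ((T1W a1 a2 a3 t0 + 0) * x0 + bW a1 a2 a3 t0) * d_x2 A1 (t0,x0)
          - 0 * A1 (t0,x0) - cW a1 a2 a3 = 0"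
      using rfa t0I x0J unfolding RF_def by blast
    hence "cW a1 a2 a3 = 0" using T2z[OF t0I] b1z TWz[OF t0I] T1z[OF t0I] bz[OF t0I] by simp
    thus False using a(6) by simp
  qed
qed

end

theorem corollary21:
  fixes D :: "(real \<times> real) set"
    and A1 A2 :: "real \<times> real \<Rightarrow> real"
  assumes "open D" and "connected D"
    and "smooth_on D A1" and "smooth_on D A2"
    and "\<forall>p\<in>D. A2 p \<noteq> 0"
    and "\<forall>p\<in>D. d_x2 (d_x2 A1) p \<noteq> 0"
  shows "\<forall>V1 V2 V3. lie_symmetry D A1 A2 V1 \<and> lie_symmetry D A1 A2 V2 \<and> lie_symmetry D A1 A2 V3 \<longrightarrow>
           (\<exists>c1 c2 c3 :: real. (c1, c2, c3) \<noteq> (0, 0, 0) \<and>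
              (\<forall>p \<in> Omega D. c1 *\<^sub>R V1 p + c2 *\<^sub>R V2 p + c3 *\<^sub>R V3 p = 0))"
proof (intro allI impI)
  fix V1 V2 V3
  assume "lie_symmetry D A1 A2 V1 \<and> lie_symmetry D A1 A2 V2 \<and> lie_symmetry D A1 A2 V3"
  then interpret mctx D A1 A2 V1 V2 V3 by unfold_locales (use assms in auto)
  show "\<exists>c1 c2 c3 :: real. (c1, c2, c3) \<noteq> (0, 0, 0) \<and>
              (\<forall>p \<in> Omega D. c1 *\<^sub>R V1 p + c2 *\<^sub>R V2 p + c3 *\<^sub>R V3 p = 0)" by (rule main)
qed

end
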